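(* Under the assumptions of the context, the linear program $\mathbf L_H^{\mathcal X,\infty,\mathcal T}$ has a finite optimal value $\Psi^{\mathcal X,\infty,\mathcal T}(a,\mathbf C)$, attained by an optimal solution. For every feasible point of $\mathbf L_H^{\mathcal X,\infty,\mathcal T}$, the semi-static strategy which holds, for each $n$, the claim paying $\bar e^1_n(X_{t_n})+\bar e^2_n(X_{t_n})$ at $t_n$, additionally holds the claim paying $\bar v_N(X_{t_N})$ at $t_N$, and holds $\tilde d^1_n(X_{t_n})$ shares over $[t_n,t_{n+1}]$ before exercise and $\tilde d^2_n(X_{t_n})$ shares from the exercise date on, super-replicates the American claim for all exercise dates in $\mathcal T$ and along all non-negative price paths; its cost is the objective value. Consequently \[ \inf_{\mathcal S^{\mathbb R^+,\mathcal T}(a)}H\le\Psi^{\mathcal X,\infty,\mathcal T}(a,\mathbf C). \]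
   Context: Fix $N\ge1$, $J\ge1$, times $0=t_0<t_1<\dots<t_N=T$, $\mathcal T=\{t_1,\dots,t_N\}$, $s_0>0$, strikes $0=x_0<x_1<\dots<x_J$ (discounted prices, zero interest). Call prices $c_{j,n}$ (payoff $(X_{t_n}-x_j)^+$ at $t_n$, $c_{0,n}=s_0$) satisfy: $s_0=c_{0,n}>c_{1,n}>\dots>c_{J,n}>0$; $1>\frac{c_{0,n}-c_{1,n}}{x_1}>\frac{c_{1,n}-c_{2,n}}{x_2-x_1}>\dots>\frac{c_{J-1,n}-c_{J,n}}{x_J-x_{J-1}}>0$; $c_{j,n+1}>c_{j,n}$ for $1\le j\le J$, $1\le n\le N-1$. Let $\hat p_{0,n}=1-\frac{s_0-c_{1,n}}{x_1}$, $\hat p_{j,n}=\frac{c_{j-1,n}-c_{j,n}}{x_j-x_{j-1}}-\frac{c_{j,n}-c_{j+1,n}}{x_{j+1}-x_j}$ ($1\le j<J$), $\hat p_{J,n}=\frac{c_{J-1,n}-c_{J,n}}{x_J-x_{J-1}}$, $\hat p_{J+1,n}=c_{J,n}$. The payoff $a:[0,\infty)\times\mathcal T\to[0,\infty)$ is convex in its first argument with $\ell_n:=\lim_{x\uparrow\infty}a(x,t_n)/x<R<\infty$. $\mathbf L_H^{\mathcal X,\infty,\mathcal T}$: over reals $e^1_{j,n},e^2_{j,n},v_{j,n}$ ($0\le j\le J+1$, $1\le n\le N$), $d^1_{j,n},d^2_{j,n}$ ($1\le n\le N-1$), with $e^1_{j,N}=e^2_{j,1}=0$, minimise $\sum_n\sum_{j=0}^{J+1}(e^1_{j,n}+e^2_{j,n})\hat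 p_{j,n}+\sum_{j=0}^{J+1}v_{j,N}\hat p_{j,N}$ subject to $v_{j,n}\ge0$ and: (i) $v_{j,n}\ge a(x_j,t_n)$ ($0\le j\le J$), $v_{J+1,n}\ge\ell_n$; (ii) $e^1_{j,n}+e^2_{k,n+1}+(x_k-x_j)d^1_{j,n}\ge0$ ($0\le j,k\le J$), $e^1_{J+1,n}-d^1_{J+1,n}\ge0$, $e^2_{J+1,n+1}+d^1_{j,n}\ge0$ ($0\le j\le J$), $e^1_{J+1,n}+e^2_{J+1,n+1}\ge0$; (iii) $e^1_{j,n}+e^2_{k,n+1}+(x_k-x_j)d^2_{j,n}-v_{j,n}+v_{k,n+1}\ge0$ ($0\le j,k\le J$), $e^1_{J+1,n}-d^2_{J+1,n}-v_{J+1,n}\ge0$, $e^2_{J+1,n+1}+d^2_{j,n}+v_{J+1,n+1}\ge0$ ($0\le j\le J$), $e^1_{J+1,n}+e^2_{J+1,n+1}-v_{J+1,n}+v_{J+1,n+1}\ge0$ (with $1\le n\le N$ in (i), $1\le n\le N-1$ in (ii),(iii)). Extended linear interpolation of $(h_0,\dots,h_{J+1})$: $\bar h(x)=\frac{x_{j+1}-x}{x_{j+1}-x_j}h_j+\frac{x-x_j}{x_{j+1}-x_j}h_{j+1}$ on $[x_j,x_{j+1}]$, $j<J$, and $\bar h(x)=h_J+(x-x_J)h_{J+1}$ for $x\ge x_J$; the claim paying $\bar h(X_{t_n})$ at $t_n$ is a portfolio of bond, stock and calls of maturity $t_n$. Mixed interpolation: with $u^1_{j,n}=\frac{e^1_{j+1,n}-e^1_{j,n}}{x_{j+1}-x_j}$,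 $u^2_{j,n}=\frac{(e^1_{j+1,n}-v_{j+1,n})-(e^1_{j,n}-v_{j,n})}{x_{j+1}-x_j}$: $\tilde d^\delta_n(x_j)=d^\delta_{j,n}$; on $(x_j,x_{j+1})$, $\tilde d^\delta_n=d^\delta_{j,n}$ if $d^\delta_{j,n}\le u^\delta_{j,n}$, $=d^\delta_{j+1,n}$ if $d^\delta_{j,n}>u^\delta_{j,n}\le d^\delta_{j+1,n}$, $=u^\delta_{j,n}$ if $d^\delta_{j+1,n}<u^\delta_{j,n}<d^\delta_{j,n}$; for $x>x_J$, $\tilde d^1_n(x)=\min\{d^1_{J,n},e^1_{J+1,n}\}$, $\tilde d^2_n(x)=\min\{d^2_{J,n},e^1_{J+1,n}-v_{J+1,n}\}$. $\mathcal S^{\mathbb R^+,\mathcal T}(a)$: semi-static strategies (static portfolio of bonds, stock and traded calls with cost $H$ computed from the call prices; bounded stock holdings at times $t_n$, $1\le n\le N-1$, depending on the path so far and, after exercise, on the exercise time) whose terminal payoff is $\ge a(x_\rho,\rho)$ for all paths in $[0,\infty)^N$ and all exercise times $\rho\in\mathcal T$. *)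

theory Defs
  imports "HOL-Analysis.Analysis"
begin

text \<open>Time points are indexed by n = 1..N (index n stands for t_n);
strikes by j = 0..J with x 0 = 0; call prices c j n (payoff (X_{t_n} - x_j)^+ at t_n);
the payoff a(y, t_n) is written a y n. Paths are functions w :: nat => real, where
w n is the (discounted) price at t_n, n = 1..N; exercise times are indices rho in 1..N.\<close>

definition phat :: "nat \<Rightarrow> (nat \<Rightarrow> real) \<Rightarrow> real \<Rightarrow> (nat \<Rightarrow> nat \<Rightarrow> real) \<Rightarrow> nat \<Rightarrow> nat \<Rightarrow> real" where
  "phat J x s0 c j n =
     (if j = 0 then 1 - (s0 - c 1 n) / x 1
      else if j < J then (c (j-1) n - c j n) / (x j - x (j-1)) - (c j n - c (j+1) n) / (x (j+1) - x j)
      else if j = J then (c (J-1) n - c J n) / (x J - x (J-1))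
      else if j = J + 1 then c J n
      else 0)"

record lp_point =
  e1 :: "nat \<Rightarrow> nat \<Rightarrow> real"
  e2 :: "nat \<Rightarrow> nat \<Rightarrow> real"
  v  :: "nat \<Rightarrow> nat \<Rightarrow> real"
  d1 :: "nat \<Rightarrow> nat \<Rightarrow> real"
  d2 :: "nat \<Rightarrow> nat \<Rightarrow> real"

definition lp_objective :: "nat \<Rightarrow> nat \<Rightarrow> (nat \<Rightarrow> real) \<Rightarrow> real \<Rightarrow> (nat \<Rightarrow> nat \<Rightarrow> real) \<Rightarrow> lp_point \<Rightarrow> real" where
  "lp_objective N J x s0 c z =
     (\<Sum>n = 1..N. \<Sum>j = 0..J+1. (e1 z j n + e2 z j n) * phat J x s0 c j n)
     + (\<Sum>j = 0..J+1. v z j N * phat J x s0 c j N)"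

definition lp_feasible :: "nat \<Rightarrow> nat \<Rightarrow> (nat \<Rightarrow> real) \<Rightarrow> (real \<Rightarrow> nat \<Rightarrow> real) \<Rightarrow> (nat \<Rightarrow> real) \<Rightarrow> lp_point \<Rightarrow> bool" where
  "lp_feasible N J x a ell z \<longleftrightarrow>
     (\<forall>j \<le> J+1. e1 z j N = 0 \<and> e2 z j 1 = 0) \<and>
     (\<forall>n \<in> {1..N}. \<forall>j \<le> J+1. v z j n \<ge> 0) \<and>
     \<comment> \<open>(i)\<close>
     (\<forall>n \<in> {1..N}. (\<forall>j \<le> J. v z j n \<ge> a (x j) n) \<and> v z (J+1) n \<ge> ell n) \<and>
     \<comment> \<open>(ii)\<close>
     (\<forall>n \<in> {1..<N}.
        (\<forall>j \<le> J. \<forall>k \<le> J. e1 z j n + e2 z k (n+1) + (x k - x j) * d1 z j n \<ge> 0) \<and>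
        e1 z (J+1) n - d1 z (J+1) n \<ge> 0 \<and>
        (\<forall>j \<le> J. e2 z (J+1) (n+1) + d1 z j n \<ge> 0) \<and>
        e1 z (J+1) n + e2 z (J+1) (n+1) \<ge> 0) \<and>
     \<comment> \<open>(iii)\<close>
     (\<forall>n \<in> {1..<N}.
        (\<forall>j \<le> J. \<forall>k \<le> J. e1 z j n + e2 z k (n+1) + (x k - x j) * d2 z j n - v z j n + v z k (n+1) \<ge> 0) \<and>
        e1 z (J+1) n - d2 z (J+1) n - v z (J+1) n \<ge> 0 \<and>
        (\<forall>j \<le> J. e2 z (J+1) (n+1) + d2 z j n + v z (J+1) (n+1) \<ge> 0) \<and>
        e1 z (J+1) n + e2 z (J+1) (n+1) - v z (J+1) n + v z (J+1) (n+1) \<ge> 0)"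

definition lp_value :: "nat \<Rightarrow> nat \<Rightarrow> (nat \<Rightarrow> real) \<Rightarrow> real \<Rightarrow> (nat \<Rightarrow> nat \<Rightarrow> real) \<Rightarrow> (real \<Rightarrow> nat \<Rightarrow> real) \<Rightarrow> (nat \<Rightarrow> real) \<Rightarrow> real" where
  "lp_value N J x s0 c a ell = Inf (lp_objective N J x s0 c ` {z. lp_feasible N J x a ell z})"

definition ext_interp :: "nat \<Rightarrow> (nat \<Rightarrow> real) \<Rightarrow> (nat \<Rightarrow> real) \<Rightarrow> real \<Rightarrow> real" where
  "ext_interp J x h y =
     (if x J \<le> y then h J + (y - x J) * h (J+1)
      else (let j = (GREATEST j. j < J \<and> x j \<le> y) in
              (x (j+1) - y) / (x (j+1) - x j) * h j + (y - x j) / (x (j+1) - x j) * h (j+1)))"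

definition mixed_interp :: "nat \<Rightarrow> (nat \<Rightarrow> real) \<Rightarrow> (nat \<Rightarrow> real) \<Rightarrow> (nat \<Rightarrow> real) \<Rightarrow> real \<Rightarrow> real \<Rightarrow> real" where
  "mixed_interp J x d u dinf y =
     (if \<exists>j \<le> J. y = x j then d (THE j. j \<le> J \<and> y = x j)
      else if x J < y then dinf
      else (let j = (GREATEST j. j < J \<and> x j \<le> y) in
              if d j \<le> u j then d j
              else if u j \<le> d (j+1) then d (j+1)
              else u j))"

definition u1 :: "(nat \<Rightarrow> real) \<Rightarrow> lp_point \<Rightarrow> nat \<Rightarrow> nat \<Rightarrow> real" where
  "u1 x z n j = (e1 z (j+1) n - e1 z j n) / (x (j+1) - x j)"

definition u2 :: "(nat \<Rightarrow> real) \<Rightarrow> lp_point \<Rightarrow> nat \<Rightarrow> nat \<Rightarrow> real" where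
  "u2 x z n j = ((e1 z (j+1) n - v z (j+1) n) - (e1 z j n - v z j n)) / (x (j+1) - x j)"

definition dtilde1 :: "nat \<Rightarrow> (nat \<Rightarrow> real) \<Rightarrow> lp_point \<Rightarrow> nat \<Rightarrow> real \<Rightarrow> real" where
  "dtilde1 J x z n = mixed_interp J x (\<lambda>j. d1 z j n) (u1 x z n) (min (d1 z J n) (e1 z (J+1) n))"

definition dtilde2 :: "nat \<Rightarrow> (nat \<Rightarrow> real) \<Rightarrow> lp_point \<Rightarrow> nat \<Rightarrow> real \<Rightarrow> real" where
  "dtilde2 J x z n = mixed_interp J x (\<lambda>j. d2 z j n) (u2 x z n) (min (d2 z J n) (e1 z (J+1) n - v z (J+1) n))"

text \<open>Static part: bond, stock (held to T) and calls cll j n (strike x j, maturity t_n,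
j = 0..J, n = 1..N; the strike-0 call has price s0); dynamic part: stock holding
dlt n w rho over [t_n, t_(n+1)], n = 1..N-1, given path w and exercise index rho.
All cash flows are accumulated (zero interest) to T.\<close>
record strategy =
  bnd :: real
  stk :: real
  cll :: "nat \<Rightarrow> nat \<Rightarrow> real"
  dlt :: "nat \<Rightarrow> (nat \<Rightarrow> real) \<Rightarrow> nat \<Rightarrow> real"

definition nonneg_path :: "nat \<Rightarrow> (nat \<Rightarrow> real) \<Rightarrow> bool" where
  "nonneg_path N w \<longleftrightarrow> (\<forall>n \<in> {1..N}. 0 \<le> w n)"

definition static_payoff :: "nat \<Rightarrow> nat \<Rightarrow> (nat \<Rightarrow> real) \<Rightarrow> strategy \<Rightarrow> (nat \<Rightarrow> real) \<Rightarrow> real" where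
  "static_payoff N J x s w =
     bnd s + stk s * w N + (\<Sum>n = 1..N. \<Sum>j = 0..J. cll s j n * max (w n - x j) 0)"

definition cost :: "nat \<Rightarrow> nat \<Rightarrow> real \<Rightarrow> (nat \<Rightarrow> nat \<Rightarrow> real) \<Rightarrow> strategy \<Rightarrow> real" where
  "cost N J s0 c s = bnd s + stk s * s0 + (\<Sum>n = 1..N. \<Sum>j = 0..J. cll s j n * c j n)"

definition gains :: "nat \<Rightarrow> strategy \<Rightarrow> (nat \<Rightarrow> real) \<Rightarrow> nat \<Rightarrow> real" where
  "gains N s w rho = (\<Sum>n \<in> {1..<N}. dlt s n w rho * (w (n+1) - w n))"

text \<open>Admissibility of the dynamic part: at t_n the holding depends only on
w 1, ..., w n and, after exercise (rho \<le> n), on the exercise index; before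
exercise only on the fact that rho > n.\<close>
definition admissible_delta :: "nat \<Rightarrow> strategy \<Rightarrow> bool" where
  "admissible_delta N s \<longleftrightarrow>
     (\<forall>n \<in> {1..<N}. \<forall>w w' rho rho'.
        nonneg_path N w \<longrightarrow> nonneg_path N w' \<longrightarrow> rho \<in> {1..N} \<longrightarrow> rho' \<in> {1..N} \<longrightarrow>
        (\<forall>k \<in> {1..n}. w k = w' k) \<longrightarrow>
        (if rho \<le> n then rho' = rho else n < rho') \<longrightarrow>
        dlt s n w rho = dlt s n w' rho') \<and>
     (\<exists>B. \<forall>n \<in> {1..<N}. \<forall>w rho. nonneg_path N w \<longrightarrow> rho \<in> {1..N} \<longrightarrow> \<bar>dlt s n w rho\<bar> \<le> B)"

definition superhedges :: "nat \<Rightarrow> nat \<Rightarrow> (nat \<Rightarrow> real) \<Rightarrow> (real \<Rightarrow> nat \<Rightarrow> real) \<Rightarrow> strategy set" where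
  "superhedges N J x a =
     {s. admissible_delta N s \<and>
         (\<forall>w rho. nonneg_path N w \<longrightarrow> rho \<in> {1..N} \<longrightarrow>
            static_payoff N J x s w + gains N s w rho \<ge> a (w rho) rho)}"

end

theory Submission
  imports Defs "HOL-Library.Function_Algebras"
begin


lemma x_strict:
  fixes x :: "nat \<Rightarrow> real" and k :: nat
  assumes xs: "\<forall>j<J. x j < x (j+1)"
  shows "i < k \<Longrightarrow> k \<le> J \<Longrightarrow> x i < x k"
proof (induction k)
  case 0 then show ?case by simp
next
  case (Suc k)
  have "x k < x (Suc k)" using xs Suc.prems by auto
  then show ?case using Suc by (cases "i < k") (auto simp: less_Suc_eq)
qed

lemma x_le:
  fixes x :: "nat \<Rightarrow> real"
  assumes xs: "\<forall>j<J. x j < x (j+1)"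
  shows "i \<le> k \<Longrightarrow> k \<le> J \<Longrightarrow> (x i :: real) \<le> x k"
proof (cases "i = k")
  case False
  assume "i \<le> k" "k \<le> J"
  then have "i < k" using False by auto
  then show ?thesis using x_strict[OF xs, of i k] \<open>k \<le> J\<close> by auto
qed auto

lemma x_inj:
  fixes x :: "nat \<Rightarrow> real"
  assumes xs: "\<forall>j<J. x j < x (j+1)"
  shows "i \<le> J \<Longrightarrow> k \<le> J \<Longrightarrow> (x i :: real) = x k \<Longrightarrow> i = k"
  using x_strict[OF xs, of i k] x_strict[OF xs, of k i] by (cases i k rule: linorder_cases) auto

lemma locate:
  fixes x :: "nat \<Rightarrow> real"
  assumes xs: "\<forall>j<J. x j < x (j+1)" and x0: "x 0 = 0" and y0: "0 \<le> y" and yJ: "y < x J"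
  shows "\<exists>i<J. x i \<le> y \<and> y < x (i+1)"
proof -
  define S where "S = {j. j \<le> J \<and> x j \<le> y}"
  have fin: "finite S" unfolding S_def by (rule finite_subset[of _ "{..J}"]) auto
  have "0 \<in> S" unfolding S_def using x0 y0 by auto
  define i where "i = Max S"
  have iS: "i \<in> S" unfolding i_def using fin \<open>0 \<in> S\<close> Max_in by blast
  have imax: "\<And>j. j \<in> S \<Longrightarrow> j \<le> i" unfolding i_def using fin by auto
  have "i \<noteq> J" using iS yJ unfolding S_def by auto
  then have iJ: "i < J" using iS unfolding S_def by auto
  have "\<not> x (i+1) \<le> y"
  proof
    assume "x (i+1) \<le> y"
    then have "i+1 \<in> S" unfolding S_def using iJ by auto
    then show False using imax by fastforce
  qed
  then show ?thesis using iJ iS unfolding S_def by auto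
qed

lemma greatest_eq:
  fixes x :: "nat \<Rightarrow> real"
  assumes xs: "\<forall>j<J. x j < x (j+1)" and iJ: "i < J" and "x i \<le> y" and "y < x (i+1)"
  shows "(GREATEST j. j < J \<and> x j \<le> y) = i"
proof (rule Greatest_equality)
  show "i < J \<and> x i \<le> y" using assms by auto
  fix j assume "j < J \<and> x j \<le> y"
  then show "j \<le> i"
    using x_le[OF xs, of "i+1" j] assms by (metis Suc_eq_plus1 not_less_eq_eq order.strict_trans2 linorder_not_le less_imp_le_nat)
qed

lemma ext_mid:
  fixes x :: "nat \<Rightarrow> real"
  assumes xs: "\<forall>j<J. x j < x (j+1)" and iJ: "i < J" and "x i \<le> y" and "y < x (i+1)"
  shows "ext_interp J x h y = (x (i+1) - y) / (x (i+1) - x i) * h i + (y - x i) / (x (i+1) - x i) * h (i+1)"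
proof -
  have "x (i+1) \<le> x J" using x_le[OF xs, of "i+1" J] iJ by auto
  then have "\<not> x J \<le> y" using assms by auto
  then show ?thesis unfolding ext_interp_def using greatest_eq[OF xs iJ assms(3,4)] by (simp add: Let_def)
qed

lemma ext_mid':
  fixes x :: "nat \<Rightarrow> real"
  assumes xs: "\<forall>j<J. x j < x (j+1)" and iJ: "i < J" and "x i \<le> y" and "y < x (i+1)"
  shows "ext_interp J x h y = h i + (h (i+1) - h i) / (x (i+1) - x i) * (y - x i)"
proof -
  define D where "D = x (i+1) - x i"
  have d: "D \<noteq> 0" using xs iJ unfolding D_def by auto
  have 1: "(x(i+1)-y)/D * h i + (y - x i)/D * h(i+1) = ((x(i+1)-y) * h i + (y - x i) * h(i+1))/D"
    by (simp add: add_divide_distrib)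
  have 2: "h i + (h(i+1)-h i)/D*(y-x i) = (h i * D + (h(i+1)-h i)*(y - x i))/D"
    using d by (simp add: field_simps)
  have 3: "(x(i+1)-y) * h i + (y - x i) * h(i+1) = h i * D + (h(i+1)-h i)*(y - x i)"
    unfolding D_def by (simp add: algebra_simps)
  show ?thesis unfolding ext_mid[OF assms] using 1 2 3 unfolding D_def by simp
qed

lemma ext_right:
  "x J \<le> y \<Longrightarrow> ext_interp J x h y = h J + (y - x J) * h (J+1)"
  unfolding ext_interp_def by simp

lemma ext_node:
  fixes x :: "nat \<Rightarrow> real"
  assumes xs: "\<forall>j<J. x j < x (j+1)" and "j \<le> J"
  shows "ext_interp J x h (x j) = h j"
proof (cases "j = J")
  case True then show ?thesis by (simp add: ext_right)
next
  case False
  then have "j < J" using assms by auto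
  then show ?thesis using ext_mid'[OF xs \<open>j<J\<close>, of "x j"] xs by auto
qed

lemma ext_add:
  "ext_interp J x (\<lambda>j. h j + k j) y = ext_interp J x h y + ext_interp J x k y"
proof (cases "x J \<le> y")
  case True then show ?thesis unfolding ext_interp_def by (simp add: algebra_simps)
next
  case False
  define i where "i = (GREATEST j. j < J \<and> x j \<le> y)"
  define \<alpha> where "\<alpha> = (x (i+1) - y) / (x (i+1) - x i)"
  define \<beta> where "\<beta> = (y - x i) / (x (i+1) - x i)"
  have "ext_interp J x g y = \<alpha> * g i + \<beta> * g (i+1)" for g
    unfolding ext_interp_def Let_def i_def[symmetric] \<alpha>_def \<beta>_def using False by simp
  then show ?thesis by (simp add: algebra_simps)
qed

lemma ext_diff:
  "ext_interp J x (\<lambda>j. h j - k j) y = ext_interp J x h y - ext_interp J x k y"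
proof (cases "x J \<le> y")
  case True then show ?thesis unfolding ext_interp_def by (simp add: algebra_simps)
next
  case False
  define i where "i = (GREATEST j. j < J \<and> x j \<le> y)"
  define \<alpha> where "\<alpha> = (x (i+1) - y) / (x (i+1) - x i)"
  define \<beta> where "\<beta> = (y - x i) / (x (i+1) - x i)"
  have "ext_interp J x g y = \<alpha> * g i + \<beta> * g (i+1)" for g
    unfolding ext_interp_def Let_def i_def[symmetric] \<alpha>_def \<beta>_def using False by simp
  then show ?thesis by (simp add: algebra_simps)
qed

lemma ext_zero:
  fixes x :: "nat \<Rightarrow> real"
  assumes xs: "\<forall>j<J. x j < x (j+1)" and x0: "x 0 = 0" and y0: "0 \<le> y"
    and h: "\<forall>j\<le>J+1. h j = 0"
  shows "ext_interp J x h y = 0"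
proof (cases "x J \<le> y")
  case True then show ?thesis using h by (simp add: ext_right)
next
  case False
  then obtain i where i: "i < J" "x i \<le> y" "y < x (i+1)" using locate[OF xs x0 y0] by auto
  then show ?thesis using ext_mid'[OF xs i] h by simp
qed

lemma mixed_node:
  fixes x :: "nat \<Rightarrow> real"
  assumes xs: "\<forall>j<J. x j < x (j+1)" and "j \<le> J"
  shows "mixed_interp J x d u dinf (x j) = d j"
proof -
  have "(THE i. i \<le> J \<and> x j = x i) = j"
    using x_inj[OF xs] assms by (intro the_equality) auto
  then show ?thesis unfolding mixed_interp_def using assms by auto
qed

lemma mixed_right:
  fixes x :: "nat \<Rightarrow> real"
  assumes xs: "\<forall>j<J. x j < x (j+1)" and "x J < y"
  shows "mixed_interp J x d u dinf y = dinf"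
proof -
  have "\<not> (\<exists>j\<le>J. y = x j)" using x_le[OF xs, of _ J] assms by fastforce
  then show ?thesis unfolding mixed_interp_def using assms by auto
qed

lemma mixed_mid:
  fixes x :: "nat \<Rightarrow> real"
  assumes xs: "\<forall>j<J. x j < x (j+1)" and iJ: "i < J" and "x i < y" and "y < x (i+1)"
  shows "mixed_interp J x d u dinf y = (if d i \<le> u i then d i else if u i \<le> d (i+1) then d (i+1) else u i)"
proof -
  have nn: "\<not> (\<exists>j\<le>J. y = x j)"
  proof
    assume "\<exists>j\<le>J. y = x j"
    then obtain j where j: "j \<le> J" "y = x j" by auto
    show False
    proof (cases "j \<le> i")
      case True then show ?thesis using x_le[OF xs, of j i] iJ j assms by auto
    next
      case False then show ?thesis using x_le[OF xs, of "i+1" j] iJ j assms by auto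
    qed
  qed
  have "x (i+1) \<le> x J" using x_le[OF xs, of "i+1" J] iJ by auto
  then have ng: "\<not> x J < y" using assms by auto
  have g: "(GREATEST j. j < J \<and> x j \<le> y) = i" using greatest_eq[OF xs iJ _ assms(4)] assms(3) by auto
  show ?thesis by (simp only: mixed_interp_def Let_def g if_not_P[OF nn] if_not_P[OF ng])
qed




definition sl :: "nat \<Rightarrow> (nat \<Rightarrow> real) \<Rightarrow> (nat \<Rightarrow> real) \<Rightarrow> nat \<Rightarrow> real" where
  "sl J x h j = (if j < J then (h (j+1) - h j) / (x (j+1) - x j) else h (J+1))"

definition cf :: "nat \<Rightarrow> (nat \<Rightarrow> real) \<Rightarrow> (nat \<Rightarrow> real) \<Rightarrow> nat \<Rightarrow> real" where
  "cf J x h j = (if j = 0 then sl J x h 0 else sl J x h j - sl J x h (j-1))"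

lemma abel:
  fixes s C :: "nat \<Rightarrow> real"
  shows "(\<Sum>j=0..J. (if j = 0 then s 0 else s j - s (j-1)) * C j) = (\<Sum>j<J. s j * (C j - C (j+1))) + s J * C J"
proof (induction J)
  case 0 then show ?case by simp
next
  case (Suc J)
  then show ?case by (simp add: sum.atLeast0_atMost_Suc algebra_simps)
qed

lemma sum_if_split:
  fixes A :: "nat \<Rightarrow> real"
  shows "i < J \<Longrightarrow> (\<Sum>j<J. if j < i then A j else if j = i then B else 0) = (\<Sum>j<i. A j) + B"
proof (induction J)
  case 0 then show ?case by simp
next
  case (Suc J)
  show ?case
  proof (cases "i < J")
    case True then show ?thesis using Suc by simp
  next
    case False
    then have "i = J" using Suc.prems by auto
    then show ?thesis by simp
  qed
qed

lemma ext_repr: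
  fixes x :: "nat \<Rightarrow> real"
  assumes xs: "\<forall>j<J. x j < x (j+1)" and x0: "x 0 = 0" and y0: "0 \<le> y"
  shows "ext_interp J x h y = h 0 + (\<Sum>j=0..J. cf J x h j * max (y - x j) 0)"
proof -
  define C where "C j = max (y - x j) 0" for j
  have ab: "(\<Sum>j=0..J. cf J x h j * max (y - x j) 0) = (\<Sum>j<J. sl J x h j * (C j - C (j+1))) + h (J+1) * C J"
    using abel[of "sl J x h" C J] unfolding cf_def C_def by (simp add: sl_def)
  show ?thesis
  proof (cases "x J \<le> y")
    case True
    have "j < J \<Longrightarrow> sl J x h j * (C j - C (j+1)) = h (j+1) - h j" for j
    proof -
      assume j: "j < J"
      have "x j \<le> x J" "x (j+1) \<le> x J" using x_le[OF xs, of j J] x_le[OF xs, of "j+1" J] j by auto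
      then have "C j - C (j+1) = x (j+1) - x j" unfolding C_def using True by auto
      moreover have "x (j+1) - x j \<noteq> 0" using xs j by auto
      ultimately show ?thesis unfolding sl_def using j by simp
    qed
    then have "(\<Sum>j<J. sl J x h j * (C j - C (j+1))) = (\<Sum>j<J. h (Suc j) - h j)" by simp
    also have "\<dots> = h J - h 0" by (rule sum_lessThan_telescope)
    finally show ?thesis using ab True unfolding ext_right[where x=x and J=J and y=y, OF True] C_def by simp
  next
    case False
    then have yJ: "y < x J" by auto
    obtain i where i: "i < J" "x i \<le> y" "y < x (i+1)" using locate[OF xs x0 y0 yJ] by auto
    have t: "j < J \<Longrightarrow> sl J x h j * (C j - C (j+1)) = (if j < i then h (j+1) - h j else if j = i then sl J x h i * (y - x i) else 0)" for j
    proof -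
      assume j: "j < J"
      show ?thesis
      proof (cases "j < i")
        case True
        have "x (j+1) \<le> x i" "x j \<le> x i" using x_le[OF xs, of "j+1" i] x_le[OF xs, of j i] True i by auto
        then have "C j - C (j+1) = x (j+1) - x j" unfolding C_def using i by auto
        moreover have "x (j+1) - x j \<noteq> 0" using xs j by auto
        ultimately show ?thesis unfolding sl_def using j True by simp
      next
        case False
        show ?thesis
        proof (cases "j = i")
          case True
          then show ?thesis unfolding C_def using i by auto
        next
          case False
          then have "i + 1 \<le> j" using \<open>\<not> j < i\<close> by auto
          then have "x (i+1) \<le> x j" "x (i+1) \<le> x (j+1)" using x_le[OF xs, of "i+1" j] x_le[OF xs, of "i+1" "j+1"] j by auto
          then show ?thesis unfolding C_def using i \<open>\<not> j < i\<close> False by auto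
        qed
      qed
    qed
    have "(\<Sum>j<J. sl J x h j * (C j - C (j+1))) = (\<Sum>j<J. (if j < i then h (j+1) - h j else if j = i then sl J x h i * (y - x i) else 0))"
      using t by simp
    also have "\<dots> = (\<Sum>j<i. h (Suc j) - h j) + sl J x h i * (y - x i)" using sum_if_split[OF i(1)] by simp
    also have "\<dots> = h i - h 0 + sl J x h i * (y - x i)" by (simp add: sum_lessThan_telescope)
    finally have s: "(\<Sum>j<J. sl J x h j * (C j - C (j+1))) = h i - h 0 + sl J x h i * (y - x i)" .
    have "C J = 0" unfolding C_def using yJ by auto
    then show ?thesis using ab s ext_mid'[OF xs i] i(1) unfolding sl_def by simp
  qed
qed

definition P :: "nat \<Rightarrow> (nat \<Rightarrow> real) \<Rightarrow> real \<Rightarrow> (nat \<Rightarrow> nat \<Rightarrow> real) \<Rightarrow> nat \<Rightarrow> (nat \<Rightarrow> real) \<Rightarrow> real" where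
  "P J x s0 c n h = (\<Sum>j=0..J+1. h j * phat J x s0 c j n)"

lemma sbp:
  fixes h A :: "nat \<Rightarrow> real"
  shows "(\<Sum>j=0..J. h j * (A j - A (j+1))) = h 0 * A 0 - h J * A (J+1) + (\<Sum>j<J. (h (j+1) - h j) * A (j+1))"
proof (induction J)
  case 0 then show ?case by (simp add: algebra_simps)
next
  case (Suc J)
  then show ?case by (simp add: sum.atLeast0_atMost_Suc algebra_simps)
qed

lemma price:
  fixes x :: "nat \<Rightarrow> real"
  assumes J1: "J \<ge> 1" and x0: "x 0 = 0" and c0: "c 0 n = s0"
  shows "P J x s0 c n h = h 0 + (\<Sum>j=0..J. cf J x h j * c j n)"
proof -
  define A where "A j = (if j = 0 then 1 else if j \<le> J then (c (j-1) n - c j n) / (x j - x (j-1)) else 0)" for j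
  have ph: "j \<le> J \<Longrightarrow> phat J x s0 c j n = A j - A (j+1)" for j
    unfolding phat_def A_def using J1 x0 c0 by auto
  have "P J x s0 c n h = (\<Sum>j=0..J. h j * phat J x s0 c j n) + h (J+1) * c J n"
    unfolding P_def by (simp add: phat_def)
  also have "(\<Sum>j=0..J. h j * phat J x s0 c j n) = (\<Sum>j=0..J. h j * (A j - A (j+1)))"
    using ph by simp
  also have "\<dots> = h 0 * A 0 - h J * A (J+1) + (\<Sum>j<J. (h (j+1) - h j) * A (j+1))" by (rule sbp)
  also have "(\<Sum>j<J. (h (j+1) - h j) * A (j+1)) = (\<Sum>j<J. sl J x h j * (c j n - c (j+1) n))"
    by (rule sum.cong) (auto simp: A_def sl_def)
  finally have 1: "P J x s0 c n h = h 0 + (\<Sum>j<J. sl J x h j * (c j n - c (j+1) n)) + h (J+1) * c J n"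
    by (simp add: A_def)
  have 2: "(\<Sum>j=0..J. cf J x h j * c j n) = (\<Sum>j<J. sl J x h j * (c j n - c (j+1) n)) + h (J+1) * c J n"
    using abel[of "sl J x h" "\<lambda>j. c j n" J] unfolding cf_def by (simp add: sl_def)
  show ?thesis using 1 2 by simp
qed



lemma stepB:
  fixes x f g d :: "nat \<Rightarrow> real"
  assumes xs: "\<forall>j<J. x j < x (j+1)" and x0: "x 0 = 0"
    and C1: "\<forall>j\<le>J. \<forall>k\<le>J. f j + g k + (x k - x j) * d j \<ge> 0"
    and y0: "0 \<le> y" and k: "k \<le> J"
  shows "ext_interp J x f y + g k + mixed_interp J x d (\<lambda>j. (f (j+1) - f j) / (x (j+1) - x j)) (min (d J) (f (J+1))) y * (x k - y) \<ge> 0"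
proof -
  define u where "u = (\<lambda>j. (f (j+1) - f j) / (x (j+1) - x j))"
  define m where "m = min (d J) (f (J+1))"
  have main: "ext_interp J x f y + g k + mixed_interp J x d u m y * (x k - y) \<ge> 0"
  proof (cases "\<exists>j\<le>J. y = x j")
    case True
    then obtain j where j: "j \<le> J" "y = x j" by auto
    have e: "ext_interp J x f y = f j" using ext_node[OF xs j(1)] j(2) by simp
    have md: "mixed_interp J x d u m y = d j" using mixed_node[OF xs j(1)] j(2) by simp
    have "f j + g k + (x k - x j) * d j \<ge> 0" using C1 j k by auto
    then show "ext_interp J x f y + g k + mixed_interp J x d u m y * (x k - y) \<ge> 0" using e md j(2) by (simp add: mult.commute[of "d j"])
  next
    case nonnode: False
    show ?thesis
    proof (cases "x J < y")
      case True
      have e: "ext_interp J x f y = f J + (y - x J) * f (J+1)" using ext_right True by auto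
      have md: "mixed_interp J x d u m y = m" using mixed_right[OF xs True] .
      have "x k \<le> x J" using x_le[OF xs k] by auto
      have p1: "(m - d J) * (x k - x J) \<ge> 0" using \<open>x k \<le> x J\<close> unfolding m_def
        by (intro mult_nonpos_nonpos) auto
      have p2: "(y - x J) * (f (J+1) - m) \<ge> 0" using True unfolding m_def by (intro mult_nonneg_nonneg) auto
      have c: "f J + g k + (x k - x J) * d J \<ge> 0" using C1 k by auto
      have "ext_interp J x f y + g k + mixed_interp J x d u m y * (x k - y)
          = (f J + g k + (x k - x J) * d J) + (m - d J) * (x k - x J) + (y - x J) * (f (J+1) - m)"
        unfolding e md by (simp add: algebra_simps)
      then show ?thesis using p1 p2 c by linarith
    next
      case False
      have "y \<noteq> x J" using nonnode by auto
      then have yJ: "y < x J" using False by auto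
      obtain i where i: "i < J" "x i \<le> y" "y < x (i+1)" using locate[OF xs x0 y0 yJ] by auto
      have "y \<noteq> x i" using nonnode i by auto
      then have xiy: "x i < y" using i by auto
      have D: "x (i+1) - x i > 0" using xs i by auto
      have e: "ext_interp J x f y = f i + u i * (y - x i)" unfolding u_def using ext_mid'[OF xs i] by simp
      have fi1: "f (i+1) = f i + u i * (x (i+1) - x i)" unfolding u_def using D by simp
      have md: "mixed_interp J x d u m y = (if d i \<le> u i then d i else if u i \<le> d (i+1) then d (i+1) else u i)"
        using mixed_mid[OF xs i(1) xiy i(3)] .
      have ci: "f i + g k + (x k - x i) * d i \<ge> 0" using C1 k i by auto
      have ci1: "f (i+1) + g k + (x k - x (i+1)) * d (i+1) \<ge> 0" using C1 k i by auto
      show ?thesis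
      proof (cases "d i \<le> u i")
        case True
        have p: "(u i - d i) * (y - x i) \<ge> 0" using True xiy by (intro mult_nonneg_nonneg) auto
        have "ext_interp J x f y + g k + mixed_interp J x d u m y * (x k - y)
            = (f i + g k + (x k - x i) * d i) + (u i - d i) * (y - x i)"
          unfolding e md using True by (simp add: algebra_simps)
        then show ?thesis using p ci by linarith
      next
        case False
        note F1 = False
        show ?thesis
        proof (cases "u i \<le> d (i+1)")
          case True
          have p: "(d (i+1) - u i) * (x (i+1) - y) \<ge> 0" using True i by (intro mult_nonneg_nonneg) auto
          have "ext_interp J x f y + g k + mixed_interp J x d u m y * (x k - y)
              = (f (i+1) + g k + (x k - x (i+1)) * d (i+1)) + (d (i+1) - u i) * (x (i+1) - y)"
            unfolding e md fi1 using True F1 by (simp add: algebra_simps)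
          then show ?thesis using p ci1 by linarith
        next
          case False
          have v: "ext_interp J x f y + g k + mixed_interp J x d u m y * (x k - y) = f i + g k + u i * (x k - x i)"
            unfolding e md using False F1 by (simp add: algebra_simps)
          show ?thesis
          proof (cases "k \<le> i")
            case True
            have "x k \<le> x i" using x_le[OF xs True] i by auto
            then have p: "(u i - d i) * (x k - x i) \<ge> 0" using F1 by (intro mult_nonpos_nonpos) auto
            have "f i + g k + u i * (x k - x i) = (f i + g k + (x k - x i) * d i) + (u i - d i) * (x k - x i)"
              by (simp add: algebra_simps)
            then show ?thesis using v p ci by linarith
          next
            case False
            then have "i+1 \<le> k" by auto
            have "x (i+1) \<le> x k" using x_le[OF xs \<open>i+1 \<le> k\<close> k] .
            then have p: "(u i - d (i+1)) * (x k - x (i+1)) \<ge> 0"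
              using \<open>\<not> u i \<le> d (i+1)\<close> by (intro mult_nonneg_nonneg) auto
            have "f i + g k + u i * (x k - x i) = (f (i+1) + g k + (x k - x (i+1)) * d (i+1)) + (u i - d (i+1)) * (x k - x (i+1))"
              unfolding fi1 by (simp add: algebra_simps)
            then show ?thesis using v p ci1 by linarith
          qed
        qed
      qed
    qed
  qed
  then show ?thesis unfolding u_def m_def .
qed

lemma stepA:
  fixes x g :: "nat \<Rightarrow> real"
  assumes xs: "\<forall>j<J. x j < x (j+1)" and x0: "x 0 = 0"
    and y0: "0 \<le> y'" and dl: "g (J+1) + \<delta> \<ge> 0"
  shows "\<exists>k\<le>J. ext_interp J x g y' + \<delta> * (y' - y) \<ge> g k + \<delta> * (x k - y)"
proof (cases "x J \<le> y'")
  case True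
  have "ext_interp J x g y' + \<delta> * (y' - y) - (g J + \<delta> * (x J - y)) = (y' - x J) * (g (J+1) + \<delta>)"
    unfolding ext_right[where x=x and J=J and y=y', OF True] by (simp add: algebra_simps)
  moreover have "(y' - x J) * (g (J+1) + \<delta>) \<ge> 0" using True dl by auto
  ultimately show ?thesis by (intro exI[of _ J]) auto
next
  case False
  then have yJ: "y' < x J" by auto
  obtain i where i: "i < J" "x i \<le> y'" "y' < x (i+1)" using locate[OF xs x0 y0 yJ] by auto
  define v where "v = (g (i+1) - g i) / (x (i+1) - x i)"
  have D: "x (i+1) - x i > 0" using xs i by auto
  have e: "ext_interp J x g y' = g i + v * (y' - x i)" unfolding v_def using ext_mid'[OF xs i] by simp
  have gi1: "g (i+1) = g i + v * (x (i+1) - x i)" unfolding v_def using D by simp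
  show ?thesis
  proof (cases "v + \<delta> \<ge> 0")
    case True
    have "ext_interp J x g y' + \<delta> * (y' - y) - (g i + \<delta> * (x i - y)) = (v + \<delta>) * (y' - x i)"
      unfolding e by (simp add: algebra_simps)
    moreover have "(v + \<delta>) * (y' - x i) \<ge> 0" using True i by auto
    ultimately show ?thesis using i by (intro exI[of _ i]) auto
  next
    case False
    have "ext_interp J x g y' + \<delta> * (y' - y) - (g (i+1) + \<delta> * (x (i+1) - y)) = (v + \<delta>) * (y' - x (i+1))"
      unfolding e gi1 by (simp add: algebra_simps)
    moreover have "(v + \<delta>) * (y' - x (i+1)) \<ge> 0" using False i by (intro mult_nonpos_nonpos) auto
    ultimately show ?thesis using i by (intro exI[of _ "i+1"]) auto
  qed
qed

lemma delta_bound: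
  fixes x f g d :: "nat \<Rightarrow> real"
  assumes xs: "\<forall>j<J. x j < x (j+1)" and x0: "x 0 = 0"
    and C2: "\<forall>j\<le>J. g (J+1) + d j \<ge> 0" and C3: "f (J+1) + g (J+1) \<ge> 0"
    and y0: "0 \<le> y"
  shows "g (J+1) + mixed_interp J x d u (min (d J) (f (J+1))) y \<ge> 0"
proof (cases "\<exists>j\<le>J. y = x j")
  case True
  then obtain j where j: "j \<le> J" "y = x j" by auto
  show ?thesis unfolding j(2) mixed_node[OF xs j(1)] using C2 j by auto
next
  case nonnode: False
  show ?thesis
  proof (cases "x J < y")
    case True
    show ?thesis unfolding mixed_right[OF xs True] using C2 C3 by auto
  next
    case False
    have "y \<noteq> x J" using nonnode by auto
    then have yJ: "y < x J" using False by auto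
    obtain i where i: "i < J" "x i \<le> y" "y < x (i+1)" using locate[OF xs x0 y0 yJ] by auto
    have "y \<noteq> x i" using nonnode i by auto
    then have xiy: "x i < y" using i by auto
    show ?thesis unfolding mixed_mid[OF xs i(1) xiy i(3)] using C2 i
      by (auto simp: not_le) (metis Suc_eq_plus1 Suc_leI add.commute add_le_cancel_left less_eq_real_def order_trans)
  qed
qed

lemma pair:
  fixes x f g d :: "nat \<Rightarrow> real"
  assumes xs: "\<forall>j<J. x j < x (j+1)" and x0: "x 0 = 0"
    and C1: "\<forall>j\<le>J. \<forall>k\<le>J. f j + g k + (x k - x j) * d j \<ge> 0"
    and C2: "\<forall>j\<le>J. g (J+1) + d j \<ge> 0" and C3: "f (J+1) + g (J+1) \<ge> 0"
    and y0: "0 \<le> y" and y0': "0 \<le> y'"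
  shows "ext_interp J x f y + ext_interp J x g y' + mixed_interp J x d (\<lambda>j. (f (j+1) - f j) / (x (j+1) - x j)) (min (d J) (f (J+1))) y * (y' - y) \<ge> 0"
proof -
  define \<delta> where "\<delta> = mixed_interp J x d (\<lambda>j. (f (j+1) - f j) / (x (j+1) - x j)) (min (d J) (f (J+1))) y"
  have dl: "g (J+1) + \<delta> \<ge> 0" unfolding \<delta>_def using delta_bound[where f=f and g=g and d=d, OF xs x0 C2 C3 y0] .
  obtain k where k: "k \<le> J" "ext_interp J x g y' + \<delta> * (y' - y) \<ge> g k + \<delta> * (x k - y)"
    using stepA[where g=g and \<delta>=\<delta> and y=y, OF xs x0 y0' dl] by auto
  have "ext_interp J x f y + g k + \<delta> * (x k - y) \<ge> 0" unfolding \<delta>_def using stepB[OF xs x0 C1 y0 k(1)] .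
  then show ?thesis using k(2) unfolding \<delta>_def[symmetric] by linarith
qed




lemma phat_nonneg:
  fixes x :: "nat \<Rightarrow> real"
  assumes J1: "J \<ge> 1" and x0: "x 0 = 0" and c0: "c 0 n = s0"
    and slope0: "(c 0 n - c 1 n) / x 1 < 1"
    and slope_decr: "\<forall>j. j + 1 < J \<longrightarrow>
        (c (j+1) n - c (j+2) n) / (x (j+2) - x (j+1)) < (c j n - c (j+1) n) / (x (j+1) - x j)"
    and slopeJ: "(c (J-1) n - c J n) / (x J - x (J-1)) > 0"
    and cJ: "c J n > 0"
    and j: "j \<le> J + 1"
  shows "phat J x s0 c j n \<ge> 0"
proof -
  consider "j = 0" | "0 < j \<and> j < J" | "j = J" | "j = J + 1" using j J1 by linarith
  then show ?thesis
  proof cases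
    case 1 then show ?thesis unfolding phat_def using slope0 c0 by auto
  next
    case 2
    then have "j - 1 + 1 < J" by auto
    then have "(c (j-1+1) n - c (j-1+2) n) / (x (j-1+2) - x (j-1+1)) < (c (j-1) n - c (j-1+1) n) / (x (j-1+1) - x (j-1))"
      using slope_decr by blast
    moreover have "j - 1 + 1 = j" "j - 1 + 2 = j + 1" using 2 by auto
    ultimately show ?thesis unfolding phat_def using 2 by auto
  next
    case 3 then show ?thesis unfolding phat_def using slopeJ J1 by auto
  next
    case 4 then show ?thesis unfolding phat_def using cJ by auto
  qed
qed

lemma P_mono:
  assumes "\<forall>j\<le>J+1. phat J x s0 c j n \<ge> 0" and "\<forall>j\<le>J+1. h j \<le> h' j"
  shows "P J x s0 c n h \<le> P J x s0 c n h'"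
  unfolding P_def using assms by (intro sum_mono mult_right_mono) auto

lemma P_add: "P J x s0 c n (\<lambda>j. h j + k j) = P J x s0 c n h + P J x s0 c n k"
  unfolding P_def by (simp add: sum.distrib distrib_right)

lemma P_neg: "P J x s0 c n (\<lambda>j. - h j) = - P J x s0 c n h"
  unfolding P_def by (simp add: sum_negf)

lemma lower:
  fixes x f g d :: "nat \<Rightarrow> real"
  assumes xs: "\<forall>j<J. x j < x (j+1)" and x0: "x 0 = 0" and J1: "J \<ge> 1"
    and C1: "\<forall>j\<le>J. \<forall>k\<le>J. f j + g k + (x k - x j) * d j \<ge> 0"
    and C2: "\<forall>j\<le>J. g (J+1) + d j \<ge> 0" and C3: "f (J+1) + g (J+1) \<ge> 0"
    and c0: "c 0 n = s0" and c0': "c 0 n' = s0"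
    and pn: "\<forall>j\<le>J+1. phat J x s0 c j n \<ge> 0" and pn': "\<forall>j\<le>J+1. phat J x s0 c j n' \<ge> 0"
    and cinc: "\<forall>j. 1 \<le> j \<longrightarrow> j \<le> J \<longrightarrow> c j n \<le> c j n'"
  shows "P J x s0 c n f + P J x s0 c n' g \<ge> 0"
proof -
  define \<phi> where "\<phi> k = Max ((\<lambda>j. - f j - d j * (x k - x j)) ` {..J})" for k
  have \<phi>_ge: "j \<le> J \<Longrightarrow> - f j - d j * (x k - x j) \<le> \<phi> k" for j k
    unfolding \<phi>_def by (intro Max_ge) auto
  have \<phi>_in: "\<exists>i\<le>J. \<phi> k = - f i - d i * (x k - x i)" for k
  proof -
    have "\<phi> k \<in> (\<lambda>j. - f j - d j * (x k - x j)) ` {..J}" unfolding \<phi>_def by (intro Max_in) auto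
    then show ?thesis by auto
  qed
  define M where "M = Max ((\<lambda>j. - d j) ` {..J})"
  have M_ge: "j \<le> J \<Longrightarrow> - d j \<le> M" for j unfolding M_def by (intro Max_ge) auto
  have M_le: "M \<le> g (J+1)"
  proof -
    have "M \<in> (\<lambda>j. - d j) ` {..J}" unfolding M_def by (intro Max_in) auto
    then show ?thesis using C2 by auto
  qed
  define H where "H k = (if k \<le> J then \<phi> k else max M (- f (J+1)))" for k
  have Hg: "\<forall>j\<le>J+1. H j \<le> g j"
  proof (intro allI impI)
    fix k assume k: "k \<le> J + 1"
    show "H k \<le> g k"
    proof (cases "k \<le> J")
      case True
      obtain i where i: "i \<le> J" "\<phi> k = - f i - d i * (x k - x i)" using \<phi>_in by blast
      have "f i + g k + (x k - x i) * d i \<ge> 0" using C1 i True by auto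
      then show ?thesis unfolding H_def using True i by (simp add: algebra_simps)
    next
      case False
      then have "k = J + 1" using k by auto
      then show ?thesis unfolding H_def using M_le C3 False by auto
    qed
  qed
  have Hf: "\<forall>j\<le>J+1. - f j \<le> H j"
  proof (intro allI impI)
    fix k assume k: "k \<le> J + 1"
    show "- f k \<le> H k"
    proof (cases "k \<le> J")
      case True then show ?thesis unfolding H_def using \<phi>_ge[of k k] by simp
    next
      case False
      then have "k = J + 1" using k by auto
      then show ?thesis unfolding H_def by auto
    qed
  qed
  have cfH: "cf J x H k \<ge> 0" if k1: "1 \<le> k" and kJ: "k \<le> J" for k
  proof -
    obtain i where i: "i \<le> J" "\<phi> k = - f i - d i * (x k - x i)" using \<phi>_in by blast
    have Hk: "H k = - f i - d i * (x k - x i)" unfolding H_def using kJ i by simp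
    have "k - 1 \<le> J" using kJ by auto
    then have Hk1: "H (k-1) \<ge> - f i - d i * (x (k-1) - x i)" unfolding H_def using \<phi>_ge[OF i(1), of "k-1"] by simp
    have dk: "x k - x (k-1) > 0" using x_strict[OF xs, of "k-1" k] k1 kJ by auto
    have "H k - H (k-1) \<le> - d i * (x k - x (k-1))" using Hk Hk1 by (simp add: algebra_simps)
    moreover have "k - 1 < J" using k1 kJ by auto
    ultimately have s1: "sl J x H (k-1) \<le> - d i" unfolding sl_def using k1 kJ dk
      by (simp add: pos_divide_le_eq)
    have s2: "sl J x H k \<ge> - d i"
    proof (cases "k < J")
      case True
      have dk': "x (k+1) - x k > 0" using xs True by auto
      have Hk2: "H (k+1) \<ge> - f i - d i * (x (k+1) - x i)" unfolding H_def using True \<phi>_ge[OF i(1), of "k+1"] by simp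
      have "H (k+1) - H k \<ge> - d i * (x (k+1) - x k)" using Hk Hk2 by (simp add: algebra_simps)
      then show ?thesis unfolding sl_def using True dk' by (simp add: pos_le_divide_eq)
    next
      case False
      then have "sl J x H k = H (J+1)" unfolding sl_def by simp
      also have "H (J+1) = max M (- f (J+1))" unfolding H_def by simp
      finally show ?thesis using M_ge[OF i(1)] by linarith
    qed
    show ?thesis unfolding cf_def using k1 s1 s2 by simp
  qed
  have pr: "P J x s0 c n' H - P J x s0 c n H = (\<Sum>j=0..J. cf J x H j * (c j n' - c j n))"
    using price[where J=J and x=x and c=c and n=n and h=H, OF J1 x0 c0]
      price[where J=J and x=x and c=c and n=n' and h=H, OF J1 x0 c0']
    by (simp add: sum_subtractf[symmetric] right_diff_distrib)
  have "(\<Sum>j=0..J. cf J x H j * (c j n' - c j n)) \<ge> 0"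
  proof (intro sum_nonneg)
    fix j assume "j \<in> {0..J}"
    then show "cf J x H j * (c j n' - c j n) \<ge> 0"
      using cfH[of j] cinc c0 c0' by (cases "j = 0") (auto intro!: mult_nonneg_nonneg)
  qed
  then have 1: "P J x s0 c n H \<le> P J x s0 c n' H" using pr by simp
  have 2: "P J x s0 c n' H \<le> P J x s0 c n' g" using P_mono[OF pn' Hg] .
  have 3: "P J x s0 c n (\<lambda>j. - f j) \<le> P J x s0 c n H" using P_mono[OF pn Hf] .
  show ?thesis using 1 2 3 P_neg[of J x s0 c n f] by linarith
qed

lemma vbar_ge:
  fixes x v :: "nat \<Rightarrow> real" and A :: "real \<Rightarrow> real"
  assumes xs: "\<forall>j<J. x j < x (j+1)" and x0: "x 0 = 0"
    and conv: "convex_on {0..} A" and lim: "((\<lambda>y. A y / y) \<longlongrightarrow> l) at_top"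
    and vge: "\<forall>j\<le>J. A (x j) \<le> v j" and vl: "l \<le> v (J+1)" and y0: "0 \<le> y"
  shows "A y \<le> ext_interp J x v y"
proof -
  have xnn: "j \<le> J \<Longrightarrow> 0 \<le> x j" for j using x_le[OF xs, of 0 j] x0 by auto
  show ?thesis
  proof (cases "x J \<le> y")
    case True
    have key: "A y \<le> A (x J) + (y - x J) * l"
    proof (cases "y = x J")
      case True then show ?thesis by simp
    next
      case False
      then have yJ: "x J < y" using \<open>x J \<le> y\<close> by auto
      define s where "s Y = (A Y - A (x J)) / (Y - x J)" for Y
      have mono: "s y \<le> s Y" if Y: "y \<le> Y" for Y
      proof -
        define t where "t = (y - x J) / (Y - x J)"
        have Yp: "Y - x J > 0" using Y yJ by auto
        have t0: "0 \<le> t" "t \<le> 1" unfolding t_def using Yp Y yJ by auto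
        have "t * (Y - x J) = y - x J" unfolding t_def using Yp by simp
        then have h: "t * Y - t * x J = y - x J" by (simp add: right_diff_distrib)
        have "(1 - t) *\<^sub>R x J + t *\<^sub>R Y = x J + (t * Y - t * x J)" by (simp add: algebra_simps)
        then have yeq: "(1 - t) *\<^sub>R x J + t *\<^sub>R Y = y" using h by simp
        have "A y \<le> (1 - t) * A (x J) + t * A Y"
          using convex_onD[OF conv t0, of "x J" Y] yeq xnn[of J] Y y0 by auto
        then have "A y - A (x J) \<le> t * (A Y - A (x J))" by (simp add: algebra_simps)
        then have "(A y - A (x J)) / (y - x J) \<le> (A Y - A (x J)) / (Y - x J)"
          unfolding t_def using Yp yJ by (simp add: field_simps)
        then show ?thesis unfolding s_def .
      qed
      have xJ: "((\<lambda>Y. x J / Y) \<longlongrightarrow> 0) at_top"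
        by (intro tendsto_divide_0[OF tendsto_const] filterlim_at_top_imp_at_infinity filterlim_ident)
      have aJ: "((\<lambda>Y. A (x J) / Y) \<longlongrightarrow> 0) at_top"
        by (intro tendsto_divide_0[OF tendsto_const] filterlim_at_top_imp_at_infinity filterlim_ident)
      have lim2: "((\<lambda>Y. (A Y / Y - A (x J) / Y) / (1 - x J / Y)) \<longlongrightarrow> (l - 0) / (1 - 0)) at_top"
        by (intro tendsto_intros lim aJ xJ) simp
      have ev: "eventually (\<lambda>Y. (A Y / Y - A (x J) / Y) / (1 - x J / Y) = s Y) at_top"
        using eventually_gt_at_top[of "max 0 (x J)"]
      proof eventually_elim
        case (elim Y)
        then have "Y > 0" "Y - x J > 0" by auto
        then show ?case unfolding s_def by (simp add: field_simps)
      qed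
      have ls: "(s \<longlongrightarrow> l) at_top" using Lim_transform_eventually[OF lim2 ev] by simp
      have "s y \<le> l"
        by (rule tendsto_lowerbound[OF ls]) (auto simp: eventually_at_top_linorder intro!: exI[of _ y] mono)
      then have "A y - A (x J) \<le> l * (y - x J)" unfolding s_def using yJ by (simp add: pos_divide_le_eq)
      then show ?thesis by (simp add: algebra_simps)
    qed
    have "(y - x J) * l \<le> (y - x J) * v (J+1)" using True vl by (intro mult_left_mono) auto
    then show ?thesis unfolding ext_right[where x=x and J=J and y=y, OF True] using key vge by fastforce
  next
    case False
    then obtain i where i: "i < J" "x i \<le> y" "y < x (i+1)" using locate[OF xs x0 y0] by auto
    define t where "t = (y - x i) / (x (i+1) - x i)"
    have D: "x (i+1) - x i > 0" using xs i by auto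
    have t0: "0 \<le> t" "t \<le> 1" unfolding t_def using D i by auto
    have "t * (x (i+1) - x i) = y - x i" unfolding t_def using D by simp
    then have h: "t * x (i+1) - t * x i = y - x i" by (simp add: right_diff_distrib)
    have "(1 - t) *\<^sub>R x i + t *\<^sub>R x (i+1) = x i + (t * x (i+1) - t * x i)" by (simp add: algebra_simps)
    then have yeq: "(1 - t) *\<^sub>R x i + t *\<^sub>R x (i+1) = y" using h by simp
    have "A y \<le> (1 - t) * A (x i) + t * A (x (i+1))"
      using convex_onD[OF conv t0, of "x i" "x (i+1)"] yeq xnn[of i] xnn[of "i+1"] i by auto
    also have "\<dots> \<le> (1 - t) * v i + t * v (i+1)"
      using vge i t0 by (intro add_mono mult_left_mono) auto
    also have "\<dots> = ext_interp J x v y"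
      unfolding ext_mid[OF xs i] t_def using D by (simp add: field_simps)
    finally show ?thesis .
  qed
qed




instantiation "fun" :: (type, real_vector) real_vector
begin
definition scaleR_fun :: "real \<Rightarrow> ('a \<Rightarrow> 'b) \<Rightarrow> 'a \<Rightarrow> 'b" where
  "scaleR_fun r f = (\<lambda>x. r *\<^sub>R f x)"
instance by standard (simp_all add: scaleR_fun_def fun_eq_iff scaleR_add_right scaleR_add_left)
end

lemma scaleR_fun_apply [simp]: "(r *\<^sub>R f) x = r *\<^sub>R f x"
  by (simp add: scaleR_fun_def)

definition aff :: "('v::real_vector \<Rightarrow> real) \<Rightarrow> bool" where
  "aff g \<longleftrightarrow> (\<exists>L c. linear L \<and> (\<forall>u. g u = L u + c))"

lemma aff_comb:
  assumes "aff g"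
  shows "g ((1 - t) *\<^sub>R p + t *\<^sub>R q) = (1 - t) * g p + t * g q"
proof -
  obtain L c where L: "linear L" "\<forall>u. g u = L u + c" using assms unfolding aff_def by auto
  have add: "L (a + b) = L a + L b" and sc: "L (r *\<^sub>R a) = r * L a" for a b r
    using L(1) unfolding linear_iff by auto
  have 1: "L ((1 - t) *\<^sub>R p + t *\<^sub>R q) = (1-t) * L p + t * L q" by (simp only: add sc)
  have 2: "g ((1 - t) *\<^sub>R p + t *\<^sub>R q) = L ((1 - t) *\<^sub>R p + t *\<^sub>R q) + c" using L(2) by blast
  show ?thesis unfolding 2 1 using L(2) by (simp add: algebra_simps)
qed

lemma aff2I:
  fixes g :: "'v::real_vector \<Rightarrow> real"
  assumes "\<And>u w s t. g (s *\<^sub>R u + t *\<^sub>R w) = s * g u + t * g w + (1 - s - t) * g 0"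
  shows "aff g"
proof -
  define L where "L u = g u - g 0" for u
  have add: "L (a + b) = L a + L b" for a b
    using assms[of 1 a 1 b] unfolding L_def by simp
  have sc: "L (r *\<^sub>R a) = r * L a" for a r
    using assms[of r a 0 0] unfolding L_def by (simp add: algebra_simps)
  have "linear L" unfolding linear_iff using add sc by auto
  moreover have "\<forall>u. g u = L u + g 0" unfolding L_def by simp
  ultimately show ?thesis unfolding aff_def by blast
qed

lemma aff_compose:
  fixes h :: "'v::real_vector \<Rightarrow> real"
  assumes g: "aff g" and h: "aff h"
  shows "aff (\<lambda>u. g (u - h u *\<^sub>R e))"
proof -
  obtain L c where L: "linear L" "\<forall>u. g u = L u + c" using g unfolding aff_def by auto
  obtain Lh ch where Lh: "linear Lh" "\<forall>u. h u = Lh u + ch" using h unfolding aff_def by auto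
  have add: "L (a + b) = L a + L b" and sc: "L (r *\<^sub>R a) = r * L a" for a b r
    using L(1) unfolding linear_iff by auto
  have addh: "Lh (a + b) = Lh a + Lh b" and sch: "Lh (r *\<^sub>R a) = r * Lh a" for a b r
    using Lh(1) unfolding linear_iff by auto
  have Lm: "L (a - b) = L a - L b" for a b using add[of "a - b" b] by simp
  have Lhm: "Lh (a - b) = Lh a - Lh b" for a b using addh[of "a - b" b] by simp
  define M where "M u = L u - Lh u * L e" for u
  have "linear M" unfolding linear_iff M_def using add sc addh sch by (auto simp: algebra_simps)
  moreover have "\<forall>u. g (u - h u *\<^sub>R e) = M u + (c - ch * L e)"
  proof
    fix u
    have 1: "L (u - h u *\<^sub>R e) = L u - h u * L e" by (simp only: Lm sc)
    have 2: "g (u - h u *\<^sub>R e) = L (u - h u *\<^sub>R e) + c" using L(2) by blast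
    have 3: "h u = Lh u + ch" using Lh(2) by blast
    show "g (u - h u *\<^sub>R e) = M u + (c - ch * L e)" unfolding 2 1 M_def using 3 by (simp add: algebra_simps)
  qed
  ultimately show ?thesis unfolding aff_def by blast
qed

lemma lp_attain:
  fixes g :: "'i \<Rightarrow> 'v::real_vector \<Rightarrow> real"
  assumes "finite I"
  shows "\<lbrakk>\<forall>i\<in>I. aff (g i); aff f; \<exists>u. \<forall>i\<in>I. g i u \<ge> 0;
          \<exists>b. \<forall>u. (\<forall>i\<in>I. g i u \<ge> 0) \<longrightarrow> b \<le> f u\<rbrakk>
         \<Longrightarrow> \<exists>u. (\<forall>i\<in>I. g i u \<ge> 0) \<and> (\<forall>u'. (\<forall>i\<in>I. g i u' \<ge> 0) \<longrightarrow> f u \<le> f u')"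
  using assms
proof (induction I arbitrary: g f rule: finite_induct)
  case empty
  obtain b where b: "\<forall>u. b \<le> f u" using empty.prems(4) by auto
  obtain L c where L: "linear L" "\<forall>u. f u = L u + c" using empty.prems(2) unfolding aff_def by auto
  have sc: "L (r *\<^sub>R a) = r * L a" for a r using L(1) unfolding linear_iff by auto
  have "f 0 \<le> f u'" for u'
  proof (rule ccontr)
    assume "\<not> f 0 \<le> f u'"
    then have "L u' < L 0" using L(2) by auto
    moreover have "L 0 = 0" using sc[of 0 0] by simp
    ultimately have neg: "L u' < 0" by simp
    define t where "t = (b - c - 1) / L u'"
    have "f (t *\<^sub>R u') = b - 1" using L(2) sc neg unfolding t_def by simp
    moreover have "b \<le> f (t *\<^sub>R u')" using b by blast
    ultimately show False by linarith
  qed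
  then show ?case by auto
next
  case (insert m I')
  define h where "h = g m"
  define Pp where "Pp u \<longleftrightarrow> (\<forall>i\<in>insert m I'. g i u \<ge> 0)" for u
  define Qq where "Qq u \<longleftrightarrow> (\<forall>i\<in>I'. g i u \<ge> 0)" for u
  have PQ: "Pp u \<longleftrightarrow> Qq u \<and> h u \<ge> 0" for u unfolding Pp_def Qq_def h_def by auto
  have affI': "\<forall>i\<in>I'. aff (g i)" using insert.prems by auto
  have affh: "aff h" using insert.prems unfolding h_def by auto
  have affF: "aff f" using insert.prems by auto
  obtain p0 where p0: "Pp p0" using insert.prems(3) unfolding Pp_def by auto
  obtain b where b: "\<forall>u. Pp u \<longrightarrow> b \<le> f u" using insert.prems(4) unfolding Pp_def by auto
  have main: "\<exists>u. Pp u \<and> (\<forall>u'. Pp u' \<longrightarrow> f u \<le> f u')"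
  proof (cases "\<forall>u. h u = h 0")
    case True
    have "h 0 \<ge> 0" using p0 PQ True by metis
    then have PQ': "Pp u \<longleftrightarrow> Qq u" for u using PQ True by metis
    have "\<exists>u. Qq u \<and> (\<forall>u'. Qq u' \<longrightarrow> f u \<le> f u')"
      using insert.IH[of g f] affI' affF p0 b PQ' unfolding Qq_def by blast
    then show ?thesis using PQ' by blast
  next
    case False
    then obtain e0 where e0: "h e0 \<noteq> h 0" by auto
    obtain Lh ch where Lh: "linear Lh" "\<forall>u. h u = Lh u + ch" using affh unfolding aff_def by auto
    have addh: "Lh (a + b) = Lh a + Lh b" and sch: "Lh (r *\<^sub>R a) = r * Lh a" for a b r
      using Lh(1) unfolding linear_iff by auto
    have Lh0: "Lh 0 = 0" using sch[of 0 0] by simp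
    have Le0: "Lh e0 \<noteq> 0" using e0 Lh(2) Lh0 by auto
    define e where "e = (1 / Lh e0) *\<^sub>R e0"
    have Le: "Lh e = 1" unfolding e_def using sch Le0 by simp
    define \<pi> where "\<pi> u = u - h u *\<^sub>R e" for u
    have h\<pi>: "h (\<pi> u) = 0" for u
    proof -
      have "Lh (\<pi> u) = Lh u - h u * Lh e" unfolding \<pi>_def using addh[of "u - h u *\<^sub>R e" "h u *\<^sub>R e"] sch by simp
      then show ?thesis using Lh(2) Le by simp
    qed
    have \<pi>id: "h r = 0 \<Longrightarrow> \<pi> r = r" for r unfolding \<pi>_def by simp
    show ?thesis
    proof (cases "\<exists>q. Qq q \<and> (\<forall>u. Qq u \<longrightarrow> f q \<le> f u) \<and> h q \<ge> 0")
      case True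
      then obtain q where "Qq q" "\<forall>u. Qq u \<longrightarrow> f q \<le> f u" "h q \<ge> 0" by auto
      then show ?thesis using PQ by blast
    next
      case notB1: False
      have R: "\<exists>r. Pp r \<and> h r = 0 \<and> f r \<le> f p" if pp: "Pp p" for p
      proof -
        have "\<exists>q. Qq q \<and> h q < 0 \<and> f q \<le> f p"
        proof (cases "\<exists>b'. \<forall>u. Qq u \<longrightarrow> b' \<le> f u")
          case True
          have "\<exists>u. Qq u \<and> (\<forall>u'. Qq u' \<longrightarrow> f u \<le> f u')"
            using insert.IH[of g f] affI' affF p0 True PQ unfolding Qq_def by blast
          then obtain q where q: "Qq q" "\<forall>u'. Qq u' \<longrightarrow> f q \<le> f u'" by auto
          then have "h q < 0" using notB1 by force
          then show ?thesis using q pp PQ by blast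
        next
          case False
          then obtain q where q: "Qq q" "f q < b" by (meson not_le)
          then have "\<not> Pp q" using b by force
          then have "h q < 0" using q PQ by auto
          then show ?thesis using q b pp by force
        qed
        then obtain q where q: "Qq q" "h q < 0" "f q \<le> f p" by auto
        have hp: "h p \<ge> 0" using pp PQ by auto
        define lam where "lam = h p / (h p - h q)"
        have den: "h p - h q > 0" using hp q by auto
        have l0: "0 \<le> lam" "lam \<le> 1" unfolding lam_def using den hp q by (auto simp: field_simps)
        define r where "r = (1 - lam) *\<^sub>R p + lam *\<^sub>R q"
        have gr: "g i r = (1 - lam) * g i p + lam * g i q" if "i \<in> insert m I'" for i
          unfolding r_def using aff_comb insert.prems(1) that by blast
        have hr: "h r = 0"
        proof -
          have "h r = (1 - lam) * h p + lam * h q" unfolding r_def using aff_comb[OF affh] by blast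
          also have "\<dots> = h p - lam * (h p - h q)" by (simp add: algebra_simps)
          also have "\<dots> = 0" unfolding lam_def using den by simp
          finally show ?thesis .
        qed
        have Qr: "Qq r"
          unfolding Qq_def
        proof
          fix i assume i: "i \<in> I'"
          have "g i p \<ge> 0" "g i q \<ge> 0" using pp q(1) i unfolding Pp_def Qq_def by auto
          then show "g i r \<ge> 0" using gr[of i] i l0 by auto
        qed
        have "f r = (1 - lam) * f p + lam * f q" unfolding r_def using aff_comb[OF affF] by blast
        also have "\<dots> \<le> (1 - lam) * f p + lam * f p" using q(3) l0 by (intro add_left_mono mult_left_mono) auto
        finally have "f r \<le> f p" by (simp add: algebra_simps)
        then show ?thesis using Qr hr PQ by auto
      qed
      define g' where "g' i u = g i (\<pi> u)" for i u
      define f' where "f' u = f (\<pi> u)" for u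
      have aff': "\<forall>i\<in>I'. aff (g' i)" unfolding g'_def \<pi>_def using affI' aff_compose[OF _ affh] by blast
      have afff': "aff f'" unfolding f'_def \<pi>_def using aff_compose[OF affF affh] by blast
      have Q'P: "Pp (\<pi> u)" if "\<forall>i\<in>I'. g' i u \<ge> 0" for u
        using that h\<pi> PQ unfolding g'_def Qq_def by auto
      obtain r0 where r0: "Pp r0" "h r0 = 0" using R[OF p0] by auto
      have ne: "\<exists>u. \<forall>i\<in>I'. g' i u \<ge> 0"
        using r0 \<pi>id[of r0] unfolding g'_def Pp_def by (intro exI[of _ r0]) auto
      have bd: "\<exists>b. \<forall>u. (\<forall>i\<in>I'. g' i u \<ge> 0) \<longrightarrow> b \<le> f' u"
        using Q'P b unfolding f'_def by blast
      obtain u where u: "\<forall>i\<in>I'. g' i u \<ge> 0" "\<forall>u'. (\<forall>i\<in>I'. g' i u' \<ge> 0) \<longrightarrow> f' u \<le> f' u'"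
        using insert.IH[of g' f', OF aff' afff' ne bd] by blast
      have "Pp (\<pi> u)" using Q'P u(1) .
      moreover have "f (\<pi> u) \<le> f p" if pp: "Pp p" for p
      proof -
        obtain r where r: "Pp r" "h r = 0" "f r \<le> f p" using R[OF pp] by auto
        have "\<forall>i\<in>I'. g' i r \<ge> 0" using r \<pi>id[of r] unfolding g'_def Pp_def by auto
        then have "f' u \<le> f' r" using u(2) by blast
        then show ?thesis using r \<pi>id[of r] unfolding f'_def by simp
      qed
      ultimately show ?thesis by blast
    qed
  qed
  then show ?case unfolding Pp_def .
qed




type_synonym V = "(nat \<Rightarrow> nat \<Rightarrow> real) \<times> (nat \<Rightarrow> nat \<Rightarrow> real) \<times> (nat \<Rightarrow> nat \<Rightarrow> real) \<times> (nat \<Rightarrow> nat \<Rightarrow> real) \<times> (nat \<Rightarrow> nat \<Rightarrow> real)"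

definition dec :: "V \<Rightarrow> lp_point" where
  "dec u = \<lparr>e1 = fst u, e2 = fst (snd u), v = fst (snd (snd u)), d1 = fst (snd (snd (snd u))), d2 = snd (snd (snd (snd u)))\<rparr>"

definition enc :: "lp_point \<Rightarrow> V" where
  "enc z = (e1 z, e2 z, v z, d1 z, d2 z)"

lemma dec_enc: "dec (enc z) = z"
  by (cases z) (simp add: dec_def enc_def)

lemma dec_sel [simp]:
  "e1 (dec u) = fst u" "e2 (dec u) = fst (snd u)" "v (dec u) = fst (snd (snd u))"
  "d1 (dec u) = fst (snd (snd (snd u)))" "d2 (dec u) = snd (snd (snd (snd u)))"
  by (simp_all add: dec_def)

definition G :: "nat \<Rightarrow> nat \<Rightarrow> (nat \<Rightarrow> real) \<Rightarrow> (real \<Rightarrow> nat \<Rightarrow> real) \<Rightarrow> (nat \<Rightarrow> real) \<Rightarrow> (V \<Rightarrow> real) set" where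
  "G N J x a ell =
    (\<lambda>j u. e1 (dec u) j N) ` {..J+1} \<union> (\<lambda>j u. - e1 (dec u) j N) ` {..J+1} \<union>
    (\<lambda>j u. e2 (dec u) j 1) ` {..J+1} \<union> (\<lambda>j u. - e2 (dec u) j 1) ` {..J+1} \<union>
    (\<lambda>(n,j) u. v (dec u) j n) ` ({1..N} \<times> {..J+1}) \<union>
    (\<lambda>(n,j) u. v (dec u) j n - a (x j) n) ` ({1..N} \<times> {..J}) \<union>
    (\<lambda>n u. v (dec u) (J+1) n - ell n) ` {1..N} \<union>
    (\<lambda>(n,j,k) u. e1 (dec u) j n + e2 (dec u) k (n+1) + (x k - x j) * d1 (dec u) j n) ` ({1..<N} \<times> {..J} \<times> {..J}) \<union>
    (\<lambda>n u. e1 (dec u) (J+1) n - d1 (dec u) (J+1) n) ` {1..<N} \<union>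
    (\<lambda>(n,j) u. e2 (dec u) (J+1) (n+1) + d1 (dec u) j n) ` ({1..<N} \<times> {..J}) \<union>
    (\<lambda>n u. e1 (dec u) (J+1) n + e2 (dec u) (J+1) (n+1)) ` {1..<N} \<union>
    (\<lambda>(n,j,k) u. e1 (dec u) j n + e2 (dec u) k (n+1) + (x k - x j) * d2 (dec u) j n - v (dec u) j n + v (dec u) k (n+1)) ` ({1..<N} \<times> {..J} \<times> {..J}) \<union>
    (\<lambda>n u. e1 (dec u) (J+1) n - d2 (dec u) (J+1) n - v (dec u) (J+1) n) ` {1..<N} \<union>
    (\<lambda>(n,j) u. e2 (dec u) (J+1) (n+1) + d2 (dec u) j n + v (dec u) (J+1) (n+1)) ` ({1..<N} \<times> {..J}) \<union>
    (\<lambda>n u. e1 (dec u) (J+1) n + e2 (dec u) (J+1) (n+1) - v (dec u) (J+1) n + v (dec u) (J+1) (n+1)) ` {1..<N}"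

lemma G_finite: "finite (G N J x a ell)"
  unfolding G_def by simp

lemma aff_const: "aff (\<lambda>u. k)"
  by (rule aff2I) (simp add: algebra_simps)

lemma aff_add: "aff f \<Longrightarrow> aff g \<Longrightarrow> aff (\<lambda>u. f u + g u)"
  unfolding aff_def
proof clarify
  fix L c L' c' assume "linear L" "\<forall>u. f u = L u + c" "linear L'" "\<forall>u. g u = L' u + c'"
  then show "\<exists>La ca. linear La \<and> (\<forall>u. f u + g u = La u + ca)"
    by (intro exI[of _ "\<lambda>u. L u + L' u"] exI[of _ "c + c'"]) (auto intro: linear_compose_add)
qed

lemma aff_cmul: "aff f \<Longrightarrow> aff (\<lambda>u. k * f u)"
  unfolding aff_def
proof clarify
  fix L c assume L: "linear L" "\<forall>u. f u = L u + c"
  have "linear (\<lambda>u. k * L u)" using L(1) unfolding linear_iff by (simp add: algebra_simps)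
  then show "\<exists>La ca. linear La \<and> (\<forall>u. k * f u = La u + ca)"
    using L(2) by (intro exI[of _ "\<lambda>u. k * L u"] exI[of _ "k * c"]) (auto simp: algebra_simps)
qed

lemma aff_neg: "aff f \<Longrightarrow> aff (\<lambda>u. - f u)"
  using aff_cmul[of f "-1"] by simp

lemma aff_diff: "aff f \<Longrightarrow> aff g \<Longrightarrow> aff (\<lambda>u. f u - g u)"
  using aff_add[of f "\<lambda>u. - g u"] aff_neg[of g] by simp

lemma aff_proj:
  "aff (\<lambda>u. e1 (dec u) j n)" "aff (\<lambda>u. e2 (dec u) j n)" "aff (\<lambda>u. v (dec u) j n)"
  "aff (\<lambda>u. d1 (dec u) j n)" "aff (\<lambda>u. d2 (dec u) j n)"
  by (intro aff2I; simp)+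

lemma G_aff: "\<forall>g\<in>G N J x a ell. aff g"
  unfolding G_def
  by (auto simp del: dec_sel intro!: aff_add aff_diff aff_neg aff_cmul aff_const aff_proj)

lemma ball_img: "(\<forall>g\<in>f ` A. Pr g) \<longleftrightarrow> (\<forall>a\<in>A. Pr (f a))" by auto

lemma zero_iff_both: "(r::real) = 0 \<longleftrightarrow> 0 \<le> r \<and> 0 \<le> - r" by auto

lemma G_feas: "lp_feasible N J x a ell (dec u) \<longleftrightarrow> (\<forall>g\<in>G N J x a ell. g u \<ge> 0)"
  unfolding G_def lp_feasible_def ball_Un ball_img split_paired_Ball_Sigma
  apply (simp add: Ball_def atLeastAtMost_iff atLeastLessThan_iff atMost_iff all_conj_distrib imp_conjR zero_iff_both del: dec_sel)
  done


lemma obj_aff: "aff (\<lambda>u. lp_objective N J x s0 c (dec u))"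
  unfolding lp_objective_def
  by (intro aff2I) (simp add: algebra_simps sum.distrib sum_distrib_left)

lemma obj_split:
  "lp_objective N J x s0 c z = (\<Sum>n=1..N. P J x s0 c n (\<lambda>j. e1 z j n) + P J x s0 c n (\<lambda>j. e2 z j n)) + P J x s0 c N (\<lambda>j. v z j N)"
  unfolding lp_objective_def P_def by (simp add: sum.distrib distrib_right)

lemma shift_sum:
  fixes A B :: "nat \<Rightarrow> real"
  assumes "N \<ge> 1"
  shows "(\<Sum>n=1..N. A n + B n) = A N + B 1 + (\<Sum>n\<in>{1..<N}. A n + B (n+1))"
proof -
  obtain M where M: "N = Suc M" using assms by (cases N) auto
  have "(\<Sum>n=1..Suc M. A n + B n) = A (Suc M) + B 1 + (\<Sum>n\<in>{1..<Suc M}. A n + B (n+1))"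
    by (induction M) auto
  then show ?thesis using M by simp
qed

lemma tele:
  fixes V :: "nat \<Rightarrow> real"
  shows "1 \<le> r \<Longrightarrow> r \<le> N \<Longrightarrow> (\<Sum>n\<in>{1..<N}. if n < r then 0 else V n - V (Suc n)) = V r - V N"
proof (induction N)
  case 0 then show ?case by simp
next
  case (Suc N)
  show ?case
  proof (cases "r = Suc N")
    case True
    have "(\<Sum>n\<in>{1..<Suc N}. if n < r then 0 else V n - V (Suc n)) = 0"
      using True by (intro sum.neutral) auto
    then show ?thesis using True by simp
  next
    case False
    then have rN: "r \<le> N" using Suc.prems by auto
    then have "1 \<le> N" using Suc.prems by auto
    then have "(\<Sum>n\<in>{1..<Suc N}. if n < r then 0 else V n - V (Suc n))
        = (\<Sum>n\<in>{1..<N}. if n < r then 0 else V n - V (Suc n)) + (V N - V (Suc N))"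
      using rN by simp
    then show ?thesis using Suc.IH[OF Suc.prems(1) rN] by simp
  qed
qed

lemma feasible_exists:
  fixes x :: "nat \<Rightarrow> real"
  assumes xs: "\<forall>j<J. x j < x (j+1)" and x0: "x 0 = 0"
    and a_nonneg: "\<forall>n \<in> {1..N}. \<forall>y \<ge> 0. a y n \<ge> 0"
    and ell_R: "\<forall>n \<in> {1..N}. ell n < R"
  shows "\<exists>z. lp_feasible N J x a ell z"
proof -
  have xnn: "j \<le> J \<Longrightarrow> 0 \<le> x j" for j using x_le[OF xs, of 0 j] x0 by auto
  define A where "A = (\<Sum>n=1..N. \<Sum>j=0..J. a (x j) n)"
  define B where "B = \<bar>R\<bar>"
  have tnn: "n \<in> {1..N} \<Longrightarrow> j \<le> J \<Longrightarrow> 0 \<le> a (x j) n" for n j using a_nonneg xnn by auto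
  have aA: "a (x j) n \<le> A" if n: "n \<in> {1..N}" and j: "j \<le> J" for n j
  proof -
    have "a (x j) n \<le> (\<Sum>j=0..J. a (x j) n)" using j tnn[OF n] by (intro member_le_sum) auto
    also have "\<dots> \<le> A" unfolding A_def using n tnn by (intro member_le_sum sum_nonneg) auto
    finally show ?thesis .
  qed
  have A0: "0 \<le> A" unfolding A_def using tnn by (intro sum_nonneg) auto
  have B0: "0 \<le> B" unfolding B_def by simp
  have ellB: "n \<in> {1..N} \<Longrightarrow> ell n \<le> B" for n using ell_R unfolding B_def by force
  have Bx: "j \<le> J \<Longrightarrow> 0 \<le> B * x j" for j using B0 xnn by simp
  define z where "z = \<lparr>e1 = (\<lambda>j n. 0), e2 = (\<lambda>j n. 0), v = (\<lambda>j n. if j \<le> J then A + B * x j else B),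
                       d1 = (\<lambda>j n. 0), d2 = (\<lambda>j n. - B)\<rparr>"
  have aAB: "n \<in> {1..N} \<Longrightarrow> j \<le> J \<Longrightarrow> a (x j) n \<le> A + B * x j" for n j using aA Bx by force
  have vnn: "j \<le> J \<Longrightarrow> 0 \<le> A + B * x j" for j using A0 Bx by force
  have "lp_feasible N J x a ell z"
    unfolding lp_feasible_def
    apply (intro conjI)
        apply (simp add: z_def)
       apply (use vnn B0 in \<open>simp add: z_def\<close>)
      apply (use aAB ellB in \<open>simp add: z_def\<close>)
     apply (use B0 in \<open>simp add: z_def\<close>)
    apply (use B0 in \<open>simp add: z_def algebra_simps\<close>)
    done
  then show ?thesis by blast
qed


lemma P_zero:
  assumes "\<forall>j\<le>J+1. h j = 0"
  shows "P J x s0 c n h = 0"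
  unfolding P_def using assms by (intro sum.neutral) auto

lemma obj_nonneg:
  fixes x :: "nat \<Rightarrow> real"
  assumes xs: "\<forall>j<J. x j < x (j+1)" and x0: "x 0 = 0" and J1: "J \<ge> 1" and N1: "N \<ge> 1"
    and c0: "\<forall>n \<in> {1..N}. c 0 n = s0"
    and pnn: "\<forall>n \<in> {1..N}. \<forall>j\<le>J+1. phat J x s0 c j n \<ge> 0"
    and c_incr: "\<forall>n \<in> {1..<N}. \<forall>j \<in> {1..J}. c j n < c j (n+1)"
    and feas: "lp_feasible N J x a ell z"
  shows "lp_objective N J x s0 c z \<ge> 0"
proof -
  define A where "A n = P J x s0 c n (\<lambda>j. e1 z j n)" for n
  define B where "B n = P J x s0 c n (\<lambda>j. e2 z j n)" for n
  have F0: "\<forall>j \<le> J+1. e1 z j N = 0 \<and> e2 z j 1 = 0" using feas unfolding lp_feasible_def by blast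
  have AN: "A N = 0" unfolding A_def using F0 by (intro P_zero) auto
  have B1: "B 1 = 0" unfolding B_def using F0 by (intro P_zero) auto
  have T: "A n + B (n+1) \<ge> 0" if n: "n \<in> {1..<N}" for n
  proof -
    have F2: "(\<forall>j \<le> J. \<forall>k \<le> J. e1 z j n + e2 z k (n+1) + (x k - x j) * d1 z j n \<ge> 0) \<and>
        (\<forall>j \<le> J. e2 z (J+1) (n+1) + d1 z j n \<ge> 0) \<and> e1 z (J+1) n + e2 z (J+1) (n+1) \<ge> 0"
      using feas n unfolding lp_feasible_def by blast
    have n1: "n \<in> {1..N}" "n+1 \<in> {1..N}" using n by auto
    have cinc: "\<forall>j. 1 \<le> j \<longrightarrow> j \<le> J \<longrightarrow> c j n \<le> c j (n+1)"
      using c_incr n by (auto intro: less_imp_le)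
    have c0n: "c 0 n = s0" "c 0 (n+1) = s0" using c0 n1 by auto
    have pn: "\<forall>j\<le>J+1. phat J x s0 c j n \<ge> 0" "\<forall>j\<le>J+1. phat J x s0 c j (n+1) \<ge> 0" using pnn n1 by auto
    show ?thesis unfolding A_def B_def
      using lower[where f="\<lambda>j. e1 z j n" and g="\<lambda>j. e2 z j (n+1)" and d="\<lambda>j. d1 z j n" and n=n and n'="n+1" and c=c,
          OF xs x0 J1 _ _ _ c0n pn cinc] F2 by blast
  qed
  have V: "P J x s0 c N (\<lambda>j. v z j N) \<ge> 0"
  proof -
    have "N \<in> {1..N}" using N1 by auto
    then have "\<forall>j\<le>J+1. v z j N \<ge> 0" "\<forall>j\<le>J+1. phat J x s0 c j N \<ge> 0"
      using feas pnn unfolding lp_feasible_def by auto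
    then show ?thesis unfolding P_def by (intro sum_nonneg mult_nonneg_nonneg) auto
  qed
  have "lp_objective N J x s0 c z = (\<Sum>n=1..N. A n + B n) + P J x s0 c N (\<lambda>j. v z j N)"
    unfolding obj_split A_def B_def ..
  also have "(\<Sum>n=1..N. A n + B n) = A N + B 1 + (\<Sum>n\<in>{1..<N}. A n + B (n+1))" by (rule shift_sum[OF N1])
  finally have "lp_objective N J x s0 c z = (\<Sum>n\<in>{1..<N}. A n + B (n+1)) + P J x s0 c N (\<lambda>j. v z j N)"
    using AN B1 by simp
  moreover have "(\<Sum>n\<in>{1..<N}. A n + B (n+1)) \<ge> 0" using T by (intro sum_nonneg) auto
  ultimately show ?thesis using V by simp
qed

lemma mixed_bound:
  fixes x :: "nat \<Rightarrow> real"
  assumes xs: "\<forall>j<J. x j < x (j+1)" and x0: "x 0 = 0" and y0: "0 \<le> y"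
  shows "\<bar>mixed_interp J x d u dinf y\<bar> \<le> (\<Sum>j\<le>J. \<bar>d j\<bar>) + (\<Sum>j<J. \<bar>u j\<bar>) + \<bar>dinf\<bar>"
proof -
  define S where "S = (\<Sum>j\<le>J. \<bar>d j\<bar>) + (\<Sum>j<J. \<bar>u j\<bar>) + \<bar>dinf\<bar>"
  have s1: "(\<Sum>j\<le>J. \<bar>d j\<bar>) \<ge> 0" "(\<Sum>j<J. \<bar>u j\<bar>) \<ge> 0" by (auto intro: sum_nonneg)
  have dj: "j \<le> J \<Longrightarrow> \<bar>d j\<bar> \<le> S" for j
  proof -
    assume "j \<le> J"
    then have "\<bar>d j\<bar> \<le> (\<Sum>j\<le>J. \<bar>d j\<bar>)" by (intro member_le_sum) auto
    then show ?thesis unfolding S_def using s1 by linarith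
  qed
  have uj: "j < J \<Longrightarrow> \<bar>u j\<bar> \<le> S" for j
  proof -
    assume "j < J"
    then have "\<bar>u j\<bar> \<le> (\<Sum>j<J. \<bar>u j\<bar>)" by (intro member_le_sum) auto
    then show ?thesis unfolding S_def using s1 by linarith
  qed
  have di: "\<bar>dinf\<bar> \<le> S" unfolding S_def using s1 by linarith
  have "\<bar>mixed_interp J x d u dinf y\<bar> \<le> S"
  proof (cases "\<exists>j\<le>J. y = x j")
    case True
    then obtain j where j: "j \<le> J" "y = x j" by auto
    then show ?thesis using mixed_node[OF xs j(1)] dj[OF j(1)] by simp
  next
    case nonnode: False
    show ?thesis
    proof (cases "x J < y")
      case True
      then show ?thesis using mixed_right[OF xs True] di by simp
    next
      case False
      have "y \<noteq> x J" using nonnode by auto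
      then have yJ: "y < x J" using False by auto
      obtain i where i: "i < J" "x i \<le> y" "y < x (i+1)" using locate[OF xs x0 y0 yJ] by auto
      have "y \<noteq> x i" using nonnode i by auto
      then have xiy: "x i < y" using i by auto
      show ?thesis unfolding mixed_mid[OF xs i(1) xiy i(3)] using dj[of i] dj[of "i+1"] uj[of i] i by auto
    qed
  qed
  then show ?thesis unfolding S_def .
qed


lemma superhedge:
  fixes x :: "nat \<Rightarrow> real" and a :: "real \<Rightarrow> nat \<Rightarrow> real"
  assumes xs: "\<forall>j<J. x j < x (j+1)" and x0: "x 0 = 0" and J1: "J \<ge> 1" and N1: "N \<ge> 1"
    and c0: "\<forall>n \<in> {1..N}. c 0 n = s0"
    and a_convex: "\<forall>n \<in> {1..N}. convex_on {0..} (\<lambda>y. a y n)"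
    and ell_lim: "\<forall>n \<in> {1..N}. ((\<lambda>y. a y n / y) \<longlongrightarrow> ell n) at_top"
    and feas: "lp_feasible N J x a ell z"
  shows "\<exists>s \<in> superhedges N J x a.
           (\<forall>w. nonneg_path N w \<longrightarrow>
              static_payoff N J x s w =
                (\<Sum>n = 1..N. ext_interp J x (\<lambda>j. e1 z j n) (w n) + ext_interp J x (\<lambda>j. e2 z j n) (w n))
                + ext_interp J x (\<lambda>j. v z j N) (w N)) \<and>
           (\<forall>n \<in> {1..<N}. \<forall>w rho. nonneg_path N w \<longrightarrow> rho \<in> {1..N} \<longrightarrow>
              dlt s n w rho = (if n < rho then dtilde1 J x z n (w n) else dtilde2 J x z n (w n))) \<and>
           cost N J s0 c s = lp_objective N J x s0 c z"
proof -
  define Vn where "Vn n = (if n = N then (\<lambda>j. v z j N) else (\<lambda>j. 0))" for n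
  define Hn where "Hn n = (\<lambda>j. e1 z j n + e2 z j n + Vn n j)" for n
  define s where "s = \<lparr>bnd = (\<Sum>n=1..N. Hn n 0), stk = 0, cll = (\<lambda>j n. cf J x (Hn n) j),
       dlt = (\<lambda>n w rho. if n < rho then dtilde1 J x z n (w n) else dtilde2 J x z n (w n))\<rparr>"
  have extH: "ext_interp J x (Hn n) y = ext_interp J x (\<lambda>j. e1 z j n) y + ext_interp J x (\<lambda>j. e2 z j n) y
      + (if n = N then ext_interp J x (\<lambda>j. v z j N) y else 0)" if y0: "0 \<le> y" for n y
  proof -
    have 1: "ext_interp J x (Hn n) y = ext_interp J x (\<lambda>j. e1 z j n) y + ext_interp J x (\<lambda>j. e2 z j n) y + ext_interp J x (Vn n) y"
      unfolding Hn_def by (simp only: ext_add)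
    have 2: "ext_interp J x (Vn n) y = (if n = N then ext_interp J x (\<lambda>j. v z j N) y else 0)"
      unfolding Vn_def using ext_zero[OF xs x0 y0, of "\<lambda>j. 0"] by simp
    show ?thesis using 1 2 by simp
  qed
  have pay: "static_payoff N J x s w =
                (\<Sum>n = 1..N. ext_interp J x (\<lambda>j. e1 z j n) (w n) + ext_interp J x (\<lambda>j. e2 z j n) (w n))
                + ext_interp J x (\<lambda>j. v z j N) (w N)" if w: "nonneg_path N w" for w
  proof -
    have wn: "n \<in> {1..N} \<Longrightarrow> 0 \<le> w n" for n using w unfolding nonneg_path_def by auto
    have "static_payoff N J x s w = (\<Sum>n=1..N. Hn n 0 + (\<Sum>j=0..J. cf J x (Hn n) j * max (w n - x j) 0))"
      unfolding static_payoff_def s_def by (simp add: sum.distrib)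
    also have "\<dots> = (\<Sum>n=1..N. ext_interp J x (Hn n) (w n))"
      by (rule sum.cong) (auto simp: ext_repr[OF xs x0] wn)
    also have "\<dots> = (\<Sum>n=1..N. (ext_interp J x (\<lambda>j. e1 z j n) (w n) + ext_interp J x (\<lambda>j. e2 z j n) (w n))
      + (if n = N then ext_interp J x (\<lambda>j. v z j N) (w N) else 0))"
      by (rule sum.cong) (auto simp: extH wn)
    also have "\<dots> = (\<Sum>n = 1..N. ext_interp J x (\<lambda>j. e1 z j n) (w n) + ext_interp J x (\<lambda>j. e2 z j n) (w n))
                + ext_interp J x (\<lambda>j. v z j N) (w N)"
      using N1 by (simp add: sum.distrib sum.delta)
    finally show ?thesis .
  qed
  have cst: "cost N J s0 c s = lp_objective N J x s0 c z"
  proof -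
    have "cost N J s0 c s = (\<Sum>n=1..N. Hn n 0 + (\<Sum>j=0..J. cf J x (Hn n) j * c j n))"
      unfolding cost_def s_def by (simp add: sum.distrib)
    also have "\<dots> = (\<Sum>n=1..N. P J x s0 c n (Hn n))"
      by (rule sum.cong) (auto simp: price[where J=J and x=x, OF J1 x0] c0)
    also have "\<dots> = (\<Sum>n=1..N. (P J x s0 c n (\<lambda>j. e1 z j n) + P J x s0 c n (\<lambda>j. e2 z j n))
        + (if n = N then P J x s0 c N (\<lambda>j. v z j N) else 0))"
    proof (rule sum.cong)
      fix n assume "n \<in> {1..N}"
      have "P J x s0 c n (Hn n) = P J x s0 c n (\<lambda>j. e1 z j n) + P J x s0 c n (\<lambda>j. e2 z j n) + P J x s0 c n (Vn n)"
        unfolding Hn_def by (simp only: P_add)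
      moreover have "P J x s0 c n (Vn n) = (if n = N then P J x s0 c N (\<lambda>j. v z j N) else 0)"
        unfolding Vn_def using P_zero[of J "\<lambda>j. 0"] by simp
      ultimately show "P J x s0 c n (Hn n) = (P J x s0 c n (\<lambda>j. e1 z j n) + P J x s0 c n (\<lambda>j. e2 z j n))
        + (if n = N then P J x s0 c N (\<lambda>j. v z j N) else 0)" by simp
    qed simp
    also have "\<dots> = lp_objective N J x s0 c z"
      unfolding obj_split using N1 by (simp add: sum.distrib sum.delta)
    finally show ?thesis .
  qed
  have dl: "dlt s n w rho = (if n < rho then dtilde1 J x z n (w n) else dtilde2 J x z n (w n))" for n w rho
    unfolding s_def by simp
  define S1 where "S1 n = (\<Sum>j\<le>J. \<bar>d1 z j n\<bar>) + (\<Sum>j<J. \<bar>u1 x z n j\<bar>) + \<bar>min (d1 z J n) (e1 z (J+1) n)\<bar>" for n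
  define S2 where "S2 n = (\<Sum>j\<le>J. \<bar>d2 z j n\<bar>) + (\<Sum>j<J. \<bar>u2 x z n j\<bar>) + \<bar>min (d2 z J n) (e1 z (J+1) n - v z (J+1) n)\<bar>" for n
  have S1nn: "S1 n \<ge> 0" for n unfolding S1_def by (intro add_nonneg_nonneg sum_nonneg) auto
  have S2nn: "S2 n \<ge> 0" for n unfolding S2_def by (intro add_nonneg_nonneg sum_nonneg) auto
  define Bd where "Bd = (\<Sum>n\<in>{1..<N}. S1 n + S2 n)"
  have adm: "admissible_delta N s"
    unfolding admissible_delta_def
  proof (intro conjI)
    show "\<forall>n \<in> {1..<N}. \<forall>w w' rho rho'.
        nonneg_path N w \<longrightarrow> nonneg_path N w' \<longrightarrow> rho \<in> {1..N} \<longrightarrow> rho' \<in> {1..N} \<longrightarrow>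
        (\<forall>k \<in> {1..n}. w k = w' k) \<longrightarrow>
        (if rho \<le> n then rho' = rho else n < rho') \<longrightarrow>
        dlt s n w rho = dlt s n w' rho'"
    proof (intro ballI allI impI)
      fix n :: nat and w w' :: "nat \<Rightarrow> real" and rho rho' :: nat
      assume n: "n \<in> {1..<N}" and eq: "\<forall>k \<in> {1..n}. w k = w' k" and r: "if rho \<le> n then rho' = rho else n < rho'"
      have "w n = w' n" using eq n by auto
      moreover have "(n < rho) = (n < rho')" using r by (auto split: if_splits)
      ultimately show "dlt s n w rho = dlt s n w' rho'" unfolding dl by simp
    qed
    show "\<exists>B. \<forall>n \<in> {1..<N}. \<forall>w rho. nonneg_path N w \<longrightarrow> rho \<in> {1..N} \<longrightarrow> \<bar>dlt s n w rho\<bar> \<le> B"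
    proof (intro exI[of _ Bd] ballI allI impI)
      fix n w rho assume n: "n \<in> {1..<N}" and w: "nonneg_path N w" and rho: "rho \<in> {1..N}"
      have wn: "0 \<le> w n" using w n unfolding nonneg_path_def by auto
      have b1: "\<bar>dtilde1 J x z n (w n)\<bar> \<le> S1 n" unfolding dtilde1_def S1_def using mixed_bound[OF xs x0 wn] .
      have b2: "\<bar>dtilde2 J x z n (w n)\<bar> \<le> S2 n" unfolding dtilde2_def S2_def using mixed_bound[OF xs x0 wn] .
      have "\<bar>dlt s n w rho\<bar> \<le> S1 n + S2 n" unfolding dl using b1 b2 S1nn S2nn by auto
      also have "\<dots> \<le> Bd" unfolding Bd_def using n S1nn S2nn by (intro member_le_sum add_nonneg_nonneg) auto
      finally show "\<bar>dlt s n w rho\<bar> \<le> Bd" .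
    qed
  qed
  have u1eq: "u1 x z n = (\<lambda>j. (e1 z (j+1) n - e1 z j n) / (x (j+1) - x j))" for n
    by (rule ext) (simp add: u1_def)
  have u2eq: "u2 x z n = (\<lambda>j. ((e1 z (j+1) n - v z (j+1) n) - (e1 z j n - v z j n)) / (x (j+1) - x j))" for n
    by (rule ext) (simp add: u2_def)
  have hedge: "static_payoff N J x s w + gains N s w rho \<ge> a (w rho) rho"
    if w: "nonneg_path N w" and rho: "rho \<in> {1..N}" for w rho
  proof -
    have wn: "n \<in> {1..N} \<Longrightarrow> 0 \<le> w n" for n using w unfolding nonneg_path_def by auto
    define E1 where "E1 n = ext_interp J x (\<lambda>j. e1 z j n) (w n)" for n
    define E2 where "E2 n = ext_interp J x (\<lambda>j. e2 z j n) (w n)" for n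
    define VV where "VV n = ext_interp J x (\<lambda>j. v z j n) (w n)" for n
    define D where "D n = dlt s n w rho" for n
    have F0: "\<forall>j \<le> J+1. e1 z j N = 0 \<and> e2 z j 1 = 0" using feas unfolding lp_feasible_def by blast
    have E1N: "E1 N = 0" unfolding E1_def using F0 N1 wn[of N] by (intro ext_zero[OF xs x0]) auto
    have E21: "E2 1 = 0" unfolding E2_def using F0 N1 wn[of 1] by (intro ext_zero[OF xs x0]) auto
    have T: "E1 n + E2 (n+1) + D n * (w (n+1) - w n) \<ge> (if n < rho then 0 else VV n - VV (Suc n))"
      if n: "n \<in> {1..<N}" for n
    proof -
      have y0: "0 \<le> w n" "0 \<le> w (n+1)" using wn n by auto
      show ?thesis
      proof (cases "n < rho")
        case True
        have F2: "(\<forall>j \<le> J. \<forall>k \<le> J. e1 z j n + e2 z k (n+1) + (x k - x j) * d1 z j n \<ge> 0)"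
           "(\<forall>j \<le> J. e2 z (J+1) (n+1) + d1 z j n \<ge> 0)" "e1 z (J+1) n + e2 z (J+1) (n+1) \<ge> 0"
          using feas n unfolding lp_feasible_def by blast+
        have Dn: "D n = mixed_interp J x (\<lambda>j. d1 z j n) (\<lambda>j. (e1 z (j+1) n - e1 z j n) / (x (j+1) - x j))
            (min (d1 z J n) (e1 z (J+1) n)) (w n)"
          unfolding D_def dl dtilde1_def u1eq using True by simp
        have "0 \<le> E1 n + E2 (n+1) + D n * (w (n+1) - w n)"
          unfolding E1_def E2_def Dn
          using pair[where f="\<lambda>j. e1 z j n" and g="\<lambda>j. e2 z j (n+1)" and d="\<lambda>j. d1 z j n", OF xs x0 F2 y0] by simp
        then show ?thesis using True by simp
      next
        case False
        have F3: "(\<forall>j \<le> J. \<forall>k \<le> J. e1 z j n + e2 z k (n+1) + (x k - x j) * d2 z j n - v z j n + v z k (n+1) \<ge> 0)"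
           "(\<forall>j \<le> J. e2 z (J+1) (n+1) + d2 z j n + v z (J+1) (n+1) \<ge> 0)"
           "e1 z (J+1) n + e2 z (J+1) (n+1) - v z (J+1) n + v z (J+1) (n+1) \<ge> 0"
          using feas n unfolding lp_feasible_def by blast+
        have C1: "\<forall>j\<le>J. \<forall>k\<le>J. (e1 z j n - v z j n) + (e2 z k (n+1) + v z k (n+1)) + (x k - x j) * d2 z j n \<ge> 0"
        proof (intro allI impI)
          fix j k assume "j \<le> J" "k \<le> J"
          then have "e1 z j n + e2 z k (n+1) + (x k - x j) * d2 z j n - v z j n + v z k (n+1) \<ge> 0" using F3(1) by blast
          then show "(e1 z j n - v z j n) + (e2 z k (n+1) + v z k (n+1)) + (x k - x j) * d2 z j n \<ge> 0" by linarith
        qed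
        have C2: "\<forall>j\<le>J. (e2 z (J+1) (n+1) + v z (J+1) (n+1)) + d2 z j n \<ge> 0"
        proof (intro allI impI)
          fix j assume "j \<le> J"
          then have "e2 z (J+1) (n+1) + d2 z j n + v z (J+1) (n+1) \<ge> 0" using F3(2) by blast
          then show "(e2 z (J+1) (n+1) + v z (J+1) (n+1)) + d2 z j n \<ge> 0" by linarith
        qed
        have C3: "(e1 z (J+1) n - v z (J+1) n) + (e2 z (J+1) (n+1) + v z (J+1) (n+1)) \<ge> 0" using F3(3) by linarith
        have Dn: "D n = mixed_interp J x (\<lambda>j. d2 z j n) (\<lambda>j. ((e1 z (j+1) n - v z (j+1) n) - (e1 z j n - v z j n)) / (x (j+1) - x j))
            (min (d2 z J n) (e1 z (J+1) n - v z (J+1) n)) (w n)"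
          unfolding D_def dl dtilde2_def u2eq using False by simp
        have "0 \<le> ext_interp J x (\<lambda>j. e1 z j n - v z j n) (w n) + ext_interp J x (\<lambda>j. e2 z j (n+1) + v z j (n+1)) (w (n+1))
            + D n * (w (n+1) - w n)"
          unfolding Dn
          using pair[where f="\<lambda>j. e1 z j n - v z j n" and g="\<lambda>j. e2 z j (n+1) + v z j (n+1)" and d="\<lambda>j. d2 z j n",
              OF xs x0 C1 C2 C3 y0] by simp
        then have "0 \<le> (E1 n - VV n) + (E2 (n+1) + VV (n+1)) + D n * (w (n+1) - w n)"
          unfolding E1_def E2_def VV_def ext_diff ext_add by simp
        then show ?thesis using False by simp
      qed
    qed
    have rr: "1 \<le> rho" "rho \<le> N" using rho by auto
    have "static_payoff N J x s w + gains N s w rho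
        = (\<Sum>n = 1..N. E1 n + E2 n) + VV N + (\<Sum>n\<in>{1..<N}. D n * (w (n+1) - w n))"
      unfolding pay[OF w] gains_def E1_def E2_def VV_def D_def by simp
    also have "(\<Sum>n = 1..N. E1 n + E2 n) = E1 N + E2 1 + (\<Sum>n\<in>{1..<N}. E1 n + E2 (n+1))"
      by (rule shift_sum[OF N1])
    finally have tot: "static_payoff N J x s w + gains N s w rho
        = (\<Sum>n\<in>{1..<N}. E1 n + E2 (n+1) + D n * (w (n+1) - w n)) + VV N"
      using E1N E21 by (simp add: sum.distrib)
    have "(\<Sum>n\<in>{1..<N}. if n < rho then 0 else VV n - VV (Suc n)) \<le> (\<Sum>n\<in>{1..<N}. E1 n + E2 (n+1) + D n * (w (n+1) - w n))"
      using T by (intro sum_mono) auto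
    moreover have "(\<Sum>n\<in>{1..<N}. if n < rho then 0 else VV n - VV (Suc n)) = VV rho - VV N"
      by (rule tele[OF rr])
    ultimately have 1: "VV rho \<le> static_payoff N J x s w + gains N s w rho" using tot by simp
    have fr: "(\<forall>j \<le> J. v z j rho \<ge> a (x j) rho) \<and> v z (J+1) rho \<ge> ell rho"
      using feas rho unfolding lp_feasible_def by blast
    have cv: "convex_on {0..} (\<lambda>y. a y rho)" using a_convex rho by blast
    have lm: "((\<lambda>y. a y rho / y) \<longlongrightarrow> ell rho) at_top" using ell_lim rho by blast
    have vg: "\<forall>j \<le> J. a (x j) rho \<le> v z j rho" "ell rho \<le> v z (J+1) rho" using fr by auto
    have "a (w rho) rho \<le> VV rho" unfolding VV_def
      using vbar_ge[where A="\<lambda>y. a y rho" and v="\<lambda>j. v z j rho", OF xs x0 cv lm vg wn[OF rho]] .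
    then show ?thesis using 1 by simp
  qed
  have "s \<in> superhedges N J x a" unfolding superhedges_def using adm hedge by auto
  then show ?thesis using pay cst dl by blast
qed

theorem mainTheorem12:
  fixes N J :: nat and t x :: "nat \<Rightarrow> real" and s0 R :: real
    and c :: "nat \<Rightarrow> nat \<Rightarrow> real" and a :: "real \<Rightarrow> nat \<Rightarrow> real" and ell :: "nat \<Rightarrow> real"
  assumes N1: "N \<ge> 1" and J1: "J \<ge> 1"
    and t0: "t 0 = 0" and t_mono: "\<forall>n < N. t n < t (n+1)"
    and s0_pos: "s0 > 0"
    and x0: "x 0 = 0" and x_mono: "\<forall>j < J. x j < x (j+1)"
    and c0: "\<forall>n \<in> {1..N}. c 0 n = s0"
    and c_decr: "\<forall>n \<in> {1..N}. \<forall>j < J. c (j+1) n < c j n"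
    and cJ_pos: "\<forall>n \<in> {1..N}. c J n > 0"
    and slope0: "\<forall>n \<in> {1..N}. (c 0 n - c 1 n) / x 1 < 1"
    and slope_decr: "\<forall>n \<in> {1..N}. \<forall>j. j + 1 < J \<longrightarrow>
        (c (j+1) n - c (j+2) n) / (x (j+2) - x (j+1)) < (c j n - c (j+1) n) / (x (j+1) - x j)"
    and slopeJ: "\<forall>n \<in> {1..N}. (c (J-1) n - c J n) / (x J - x (J-1)) > 0"
    and c_incr: "\<forall>n \<in> {1..<N}. \<forall>j \<in> {1..J}. c j n < c j (n+1)"
    and a_nonneg: "\<forall>n \<in> {1..N}. \<forall>y \<ge> 0. a y n \<ge> 0"
    and a_convex: "\<forall>n \<in> {1..N}. convex_on {0..} (\<lambda>y. a y n)"
    and ell_lim: "\<forall>n \<in> {1..N}. ((\<lambda>y. a y n / y) \<longlongrightarrow> ell n) at_top"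
    and ell_R: "\<forall>n \<in> {1..N}. ell n < R"
  shows
    "(\<exists>z. lp_feasible N J x a ell z \<and>
          lp_objective N J x s0 c z = lp_value N J x s0 c a ell \<and>
          (\<forall>z'. lp_feasible N J x a ell z' \<longrightarrow> lp_objective N J x s0 c z \<le> lp_objective N J x s0 c z'))
     \<and>
     (\<forall>z. lp_feasible N J x a ell z \<longrightarrow>
        (\<exists>s \<in> superhedges N J x a.
           (\<forall>w. nonneg_path N w \<longrightarrow>
              static_payoff N J x s w =
                (\<Sum>n = 1..N. ext_interp J x (\<lambda>j. e1 z j n) (w n) + ext_interp J x (\<lambda>j. e2 z j n) (w n))
                + ext_interp J x (\<lambda>j. v z j N) (w N)) \<and>
           (\<forall>n \<in> {1..<N}. \<forall>w rho. nonneg_path N w \<longrightarrow> rho \<in> {1..N} \<longrightarrow>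
              dlt s n w rho = (if n < rho then dtilde1 J x z n (w n) else dtilde2 J x z n (w n))) \<and>
           cost N J s0 c s = lp_objective N J x s0 c z))
     \<and>
     (INF s \<in> superhedges N J x a. ereal (cost N J s0 c s)) \<le> ereal (lp_value N J x s0 c a ell)"
proof -
  have xs: "\<forall>j<J. x j < x (j+1)" using x_mono .
  have pnn: "\<forall>n \<in> {1..N}. \<forall>j\<le>J+1. phat J x s0 c j n \<ge> 0"
  proof (intro ballI allI impI)
    fix n j assume n: "n \<in> {1..N}" and j: "j \<le> J + 1"
    have sd: "\<forall>j. j + 1 < J \<longrightarrow>
        (c (j+1) n - c (j+2) n) / (x (j+2) - x (j+1)) < (c j n - c (j+1) n) / (x (j+1) - x j)"
      using slope_decr n by blast
    have h1: "c 0 n = s0" using c0 n by blast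
    have h2: "(c 0 n - c 1 n) / x 1 < 1" using slope0 n by blast
    have h3: "(c (J-1) n - c J n) / (x J - x (J-1)) > 0" using slopeJ n by blast
    have h4: "c J n > 0" using cJ_pos n by blast
    show "phat J x s0 c j n \<ge> 0"
      using phat_nonneg[where J=J and x=x and c=c and n=n, OF J1 x0 h1 h2 sd h3 h4 j] .
  qed
  have feasnn: "lp_objective N J x s0 c z \<ge> 0" if "lp_feasible N J x a ell z" for z
    using obj_nonneg[where x=x and J=J and N=N and c=c, OF xs x0 J1 N1 c0 pnn c_incr that] .
  obtain z0 where z0: "lp_feasible N J x a ell z0" using feasible_exists[where x=x and J=J and N=N, OF xs x0 a_nonneg ell_R] by blast
  have ex: "\<exists>u. (\<forall>g\<in>G N J x a ell. g u \<ge> 0) \<and>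
      (\<forall>u'. (\<forall>g\<in>G N J x a ell. g u' \<ge> 0) \<longrightarrow> lp_objective N J x s0 c (dec u) \<le> lp_objective N J x s0 c (dec u'))"
  proof (rule lp_attain[where g="\<lambda>g. g", OF G_finite])
    show "\<forall>g\<in>G N J x a ell. aff g" by (rule G_aff)
    show "aff (\<lambda>u. lp_objective N J x s0 c (dec u))" by (rule obj_aff)
    show "\<exists>u. \<forall>g\<in>G N J x a ell. 0 \<le> g u"
      using z0 G_feas[of N J x a ell "enc z0"] unfolding dec_enc by blast
    show "\<exists>b. \<forall>u. (\<forall>g\<in>G N J x a ell. 0 \<le> g u) \<longrightarrow> b \<le> lp_objective N J x s0 c (dec u)"
      using feasnn G_feas by blast
  qed
  then obtain u where u: "\<forall>g\<in>G N J x a ell. g u \<ge> 0"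
    "\<forall>u'. (\<forall>g\<in>G N J x a ell. g u' \<ge> 0) \<longrightarrow> lp_objective N J x s0 c (dec u) \<le> lp_objective N J x s0 c (dec u')"
    by blast
  define zs where "zs = dec u"
  have zsf: "lp_feasible N J x a ell zs" unfolding zs_def using G_feas u(1) by blast
  have zsmin: "\<forall>z'. lp_feasible N J x a ell z' \<longrightarrow> lp_objective N J x s0 c zs \<le> lp_objective N J x s0 c z'"
  proof (intro allI impI)
    fix z' assume "lp_feasible N J x a ell z'"
    then have "\<forall>g\<in>G N J x a ell. g (enc z') \<ge> 0" using G_feas[of N J x a ell "enc z'"] unfolding dec_enc by blast
    then show "lp_objective N J x s0 c zs \<le> lp_objective N J x s0 c z'"
      using u(2) unfolding zs_def dec_enc by (metis dec_enc)
  qed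
  have val: "lp_objective N J x s0 c zs = lp_value N J x s0 c a ell"
    unfolding lp_value_def
    by (rule cInf_eq_minimum[symmetric]) (use zsf zsmin in auto)
  have part2: "\<forall>z. lp_feasible N J x a ell z \<longrightarrow>
        (\<exists>s \<in> superhedges N J x a.
           (\<forall>w. nonneg_path N w \<longrightarrow>
              static_payoff N J x s w =
                (\<Sum>n = 1..N. ext_interp J x (\<lambda>j. e1 z j n) (w n) + ext_interp J x (\<lambda>j. e2 z j n) (w n))
                + ext_interp J x (\<lambda>j. v z j N) (w N)) \<and>
           (\<forall>n \<in> {1..<N}. \<forall>w rho. nonneg_path N w \<longrightarrow> rho \<in> {1..N} \<longrightarrow>
              dlt s n w rho = (if n < rho then dtilde1 J x z n (w n) else dtilde2 J x z n (w n))) \<and>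
           cost N J s0 c s = lp_objective N J x s0 c z)"
    using superhedge[where x=x and J=J and N=N and a=a and c=c and ell=ell, OF xs x0 J1 N1 c0 a_convex ell_lim] by blast
  obtain s where s: "s \<in> superhedges N J x a" "cost N J s0 c s = lp_objective N J x s0 c zs"
    using part2 zsf by blast
  have part3: "(INF s \<in> superhedges N J x a. ereal (cost N J s0 c s)) \<le> ereal (lp_value N J x s0 c a ell)"
  proof -
    have "(INF s \<in> superhedges N J x a. ereal (cost N J s0 c s)) \<le> ereal (cost N J s0 c s)"
      using s(1) by (rule INF_lower)
    then show ?thesis using s(2) val by simp
  qed
  show ?thesis using zsf val zsmin part2 part3 by blast
qed


end
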